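(* Let $f$ be a perfect $2$-coloring of $H(n,q)$ with quotient matrix $\begin{pmatrix} a & b\\ c& d\end{pmatrix}$ such that the set of vertices of color $1$ can be partitioned into $k$-faces. If there exists a $1$-perfect code in $H(q+1,q)$, then there exist perfect $(q+1)$-colorings $g'$ and $g''$ of $H(qn,q)$ with quotient matrices $T'=(t'_{i,j})$ and $T''=(t''_{i,j})$, $i,j\in\{1,\dots,q+1\}$, where for $1\le i,j\le q$: $t'_{i,i}=a-k(q-1)$, $t'_{i,j}=a+k$ ($i\ne j$), $t''_{i,i}=a+k(q-1)^2$, $t''_{i,j}=a-k(q-1)$ ($i\ne j$); and in both matrices the entries $(i,q+1)$ for $i\le q$ equal $qb$, the entries $(q+1,j)$ for $j\le q$ equal $c$, and the entry $(q+1,q+1)$ equals $qd$.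
   Context: The Hamming graph $H(n,q)$ has vertex set $\mathbb{Z}_q^n$, two vertices adjacent iff they differ in exactly one coordinate. A $k$-face of $H(n,q)$ is a set of vertices obtained by fixing the values of $n-k$ coordinates and letting the remaining $k$ coordinates range over $\mathbb{Z}_q$. A perfect $r$-coloring is a surjective map from the vertex set onto $\{1,\dots,r\}$ such that every vertex of color $i$ has exactly $s_{i,j}$ neighbours of color $j$; $(s_{i,j})$ is its quotient matrix. A $1$-perfect code in $H(n,q)$ is a set $C$ of vertices such that every radius-$1$ Hamming ball contains exactly one element of $C$. *)

theory Defs
  imports Main
begin

text \<open>Vertices of H(n,q): words of length n over {0..<q} (representing Z_q).\<close>
definition hverts :: "nat \<Rightarrow> nat \<Rightarrow> nat list set" where
  "hverts n q = {x. length x = n \<and> set x \<subseteq> {0..<q}}"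

definition hdist :: "nat list \<Rightarrow> nat list \<Rightarrow> nat" where
  "hdist x y = card {i. i < length x \<and> x ! i \<noteq> y ! i}"

definition hadj :: "nat list \<Rightarrow> nat list \<Rightarrow> bool" where
  "hadj x y \<longleftrightarrow> length x = length y \<and> hdist x y = 1"

definition is_face :: "nat \<Rightarrow> nat \<Rightarrow> nat \<Rightarrow> nat list set \<Rightarrow> bool" where
  "is_face n q k F \<longleftrightarrow> (\<exists>K v. K \<subseteq> {0..<n} \<and> card K = k \<and> v \<in> hverts n q \<and>
      F = {x \<in> hverts n q. \<forall>i<n. i \<notin> K \<longrightarrow> x ! i = v ! i})"

definition perfect_coloring ::
  "nat \<Rightarrow> nat \<Rightarrow> nat \<Rightarrow> (nat list \<Rightarrow> nat) \<Rightarrow> (nat \<Rightarrow> nat \<Rightarrow> int) \<Rightarrow> bool" where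
  "perfect_coloring n q r f S \<longleftrightarrow>
     f ` hverts n q = {1..r} \<and>
     (\<forall>x\<in>hverts n q. \<forall>j\<in>{1..r}.
        int (card {y \<in> hverts n q. hadj x y \<and> f y = j}) = S (f x) j)"

definition partitionable_into_faces ::
  "nat \<Rightarrow> nat \<Rightarrow> nat \<Rightarrow> nat list set \<Rightarrow> bool" where
  "partitionable_into_faces n q k A \<longleftrightarrow>
     (\<exists>P. (\<forall>F\<in>P. is_face n q k F) \<and>
          (\<forall>F\<in>P. \<forall>G\<in>P. F \<noteq> G \<longrightarrow> F \<inter> G = {}) \<and> \<Union>P = A)"

definition perfect_code :: "nat \<Rightarrow> nat \<Rightarrow> nat list set \<Rightarrow> bool" where
  "perfect_code n q C \<longleftrightarrow> C \<subseteq> hverts n q \<and>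
     (\<forall>x\<in>hverts n q. card {c \<in> C. hdist x c \<le> 1} = 1)"

end

theory Submission
  imports Defs
begin


lemma hverts_iff: "x \<in> hverts m q \<longleftrightarrow> length x = m \<and> (\<forall>i<m. x!i < q)"
  unfolding hverts_def by (auto simp: set_conv_nth)

lemma hverts_update: "x \<in> hverts m q \<Longrightarrow> v < q \<Longrightarrow> x[i:=v] \<in> hverts m q"
  by (cases "i < length x") (auto simp: hverts_iff nth_list_update)

lemma hdist_le1:
  assumes "{i. i < length x \<and> x!i \<noteq> y!i} \<subseteq> {r}"
  shows "hdist x y \<le> 1"
proof -
  have "hdist x y \<le> card {r}" unfolding hdist_def by (rule card_mono[OF _ assms]) auto
  thus ?thesis by simp
qed

lemma code_D:
  assumes pc: "perfect_code m q C" and c1: "c1 \<in> C" and c2: "c2 \<in> C"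
    and ag: "\<forall>i<m. i \<noteq> p \<longrightarrow> i \<noteq> r \<longrightarrow> c1!i = c2!i"
  shows "c1 = c2"
proof -
  have C: "C \<subseteq> hverts m q" using pc unfolding perfect_code_def by auto
  have l1: "length c1 = m" and l2: "length c2 = m" using C c1 c2 by (auto simp: hverts_iff)
  define x where "x = (if p < m then c1[p := c2!p] else c1)"
  have h1: "c1 \<in> hverts m q" and h2: "c2 \<in> hverts m q" using C c1 c2 by auto
  have xh: "x \<in> hverts m q"
  proof (cases "p < m")
    case True
    hence "c2!p < q" using h2 by (simp add: hverts_iff)
    thus ?thesis using True h1 by (simp add: x_def hverts_update)
  qed (simp add: x_def h1)
  have lx: "length x = m" using l1 by (simp add: x_def)
  have d1: "hdist x c1 \<le> 1"
    by (rule hdist_le1[where r=p]) (auto simp: x_def lx l1 nth_list_update)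
  have d2: "hdist x c2 \<le> 1"
    by (rule hdist_le1[where r=r]) (use ag in \<open>auto simp: x_def lx l1 nth_list_update split: if_splits\<close>)
  have "card {c \<in> C. hdist x c \<le> 1} = 1" using pc xh unfolding perfect_code_def by auto
  then obtain z where z: "{c \<in> C. hdist x c \<le> 1} = {z}" by (rule card_1_singletonE)
  have "c1 \<in> {z}" "c2 \<in> {z}" using c1 c2 d1 d2 z by blast+
  thus ?thesis by simp
qed

lemma code_exists:
  assumes pc: "perfect_code (q+1) q C" and pr: "p < q+1" "r < q+1" "p \<noteq> r"
    and z: "z \<in> hverts (q+1) q"
  shows "\<exists>c\<in>C. \<forall>i<q+1. i \<noteq> p \<longrightarrow> i \<noteq> r \<longrightarrow> c!i = z!i"
proof (rule ccontr)
  assume nc: "\<not> ?thesis"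
  have C: "C \<subseteq> hverts (q+1) q" using pc unfolding perfect_code_def by auto
  have lz: "length z = q+1" using z by (simp add: hverts_iff)
  have q1: "q \<ge> 1" using z by (auto simp: hverts_iff)
  define zz where "zz t1 t2 = z[p:=t1, r:=t2]" for t1 t2
  have zz_in: "zz t1 t2 \<in> hverts (q+1) q" if "t1 < q" "t2 < q" for t1 t2
    using z that unfolding zz_def by (intro hverts_update) auto
  have ex1: "\<exists>s cv. cv \<in> C \<and> s < q+1 \<and> s \<noteq> p \<and> s \<noteq> r \<and> (\<forall>i<q+1. i \<noteq> s \<longrightarrow> cv!i = zz t1 t2 ! i)"
    if t: "t1 < q" "t2 < q" for t1 t2
  proof -
    have "card {c \<in> C. hdist (zz t1 t2) c \<le> 1} = 1" using pc zz_in[OF t] unfolding perfect_code_def by auto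
    then obtain cv where cvz: "{c \<in> C. hdist (zz t1 t2) c \<le> 1} = {cv}" by (rule card_1_singletonE)
    hence cv: "cv \<in> C" "hdist (zz t1 t2) cv \<le> 1" by auto
    have lzz: "length (zz t1 t2) = q+1" using lz by (simp add: zz_def)
    define D where "D = {i. i < q+1 \<and> zz t1 t2 ! i \<noteq> cv ! i}"
    have fD: "finite D" unfolding D_def by auto
    have cD: "card D \<le> 1" using cv(2) unfolding hdist_def D_def lzz .
    have zzi: "zz t1 t2 ! i = z ! i" if "i \<noteq> p" "i \<noteq> r" for i
      using that by (simp add: zz_def nth_list_update)
    show ?thesis
    proof (cases "D = {}")
      case True
      hence "\<forall>i<q+1. i \<noteq> p \<longrightarrow> i \<noteq> r \<longrightarrow> cv!i = z!i" using zzi unfolding D_def by auto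
      with nc cv show ?thesis by blast
    next
      case False
      have "card D > 0" using fD False by auto
      with cD have "card D = 1" by linarith
      then obtain s where sD: "D = {s}" by (rule card_1_singletonE)
      have "s \<in> D" using sD by auto
      hence s: "s < q+1" by (simp add: D_def)
      have ag: "\<forall>i<q+1. i \<noteq> s \<longrightarrow> cv!i = zz t1 t2 ! i"
      proof (intro allI impI)
        fix i assume "i < q+1" "i \<noteq> s"
        hence "i \<notin> D" using sD by auto
        thus "cv!i = zz t1 t2 ! i" using \<open>i < q+1\<close> by (simp add: D_def)
      qed
      show ?thesis
      proof (cases "s = p \<or> s = r")
        case True
        hence "\<forall>i<q+1. i \<noteq> p \<longrightarrow> i \<noteq> r \<longrightarrow> cv!i = z!i" using ag zzi by auto
        with nc cv show ?thesis by blast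
      next
        case False
        thus ?thesis using cv s ag by blast
      qed
    qed
  qed
  have "\<forall>tt. \<exists>sc. fst tt < q \<and> snd tt < q \<longrightarrow> snd sc \<in> C \<and> fst sc < q+1 \<and> fst sc \<noteq> p \<and> fst sc \<noteq> r \<and>
      (\<forall>i<q+1. i \<noteq> fst sc \<longrightarrow> snd sc ! i = zz (fst tt) (snd tt) ! i)"
    using ex1 by fastforce
  from choice[OF this] obtain G where G: "\<forall>tt. fst tt < q \<and> snd tt < q \<longrightarrow> snd (G tt) \<in> C \<and> fst (G tt) < q+1 \<and> fst (G tt) \<noteq> p \<and> fst (G tt) \<noteq> r \<and>
      (\<forall>i<q+1. i \<noteq> fst (G tt) \<longrightarrow> snd (G tt) ! i = zz (fst tt) (snd tt) ! i)" by blast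
  define sf where "sf t1 t2 = fst (G (t1,t2))" for t1 t2
  define cvf where "cvf t1 t2 = snd (G (t1,t2))" for t1 t2
  have sc: "cvf t1 t2 \<in> C \<and> sf t1 t2 < q+1 \<and> sf t1 t2 \<noteq> p \<and> sf t1 t2 \<noteq> r \<and>
      (\<forall>i<q+1. i \<noteq> sf t1 t2 \<longrightarrow> cvf t1 t2 ! i = zz t1 t2 ! i)" if "t1 < q" "t2 < q" for t1 t2
    using G[rule_format, of "(t1,t2)"] that unfolding sf_def cvf_def by simp
  define \<phi> where "\<phi> = (\<lambda>(t1,t2). (sf t1 t2, t1))"
  have inj: "inj_on \<phi> ({..<q} \<times> {..<q})"
  proof (rule inj_onI, clarify)
    fix t1 t2 t1' t2'
    assume a: "t1 < q" "t2 < q" "t1' < q" "t2' < q" "\<phi> (t1, t2) = \<phi> (t1', t2')"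
    hence e: "sf t1 t2 = sf t1' t2'" "t1 = t1'" by (auto simp: \<phi>_def)
    note s1 = sc[OF a(1,2)] and s2 = sc[OF a(3,4)]
    have zp: "zz u1 u2 ! p = u1" for u1 u2 using pr lz by (simp add: zz_def nth_list_update)
    have zr: "zz u1 u2 ! r = u2" for u1 u2 using pr lz by (simp add: zz_def nth_list_update)
    have zo: "zz u1 u2 ! i = z!i" if "i\<noteq>p" "i\<noteq>r" for u1 u2 i using that by (simp add: zz_def nth_list_update)
    have eqc: "cvf t1 t2 = cvf t1' t2'"
    proof (rule code_D[OF pc, of _ _ r "sf t1 t2"])
      show "cvf t1 t2 \<in> C" "cvf t1' t2' \<in> C" using s1 s2 by blast+
      show "\<forall>i<q + 1. i \<noteq> r \<longrightarrow> i \<noteq> sf t1 t2 \<longrightarrow> cvf t1 t2 ! i = cvf t1' t2' ! i"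
      proof (intro allI impI)
        fix i assume i: "i < q+1" "i \<noteq> r" "i \<noteq> sf t1 t2"
        have "cvf t1 t2 ! i = zz t1 t2 ! i" using s1 i(1,3) by blast
        moreover have "i \<noteq> sf t1' t2'" using i(3) e(1) by simp
        moreover have "cvf t1' t2' ! i = zz t1' t2' ! i" using s2 i(1) calculation(2) by blast
        moreover have "zz t1 t2 ! i = zz t1' t2' ! i"
          using e i by (cases "i = p") (auto simp: zp zo)
        ultimately show "cvf t1 t2 ! i = cvf t1' t2' ! i" by simp
      qed
    qed
    have n1: "r \<noteq> sf t1 t2" using s1 by metis
    have r1: "cvf t1 t2 ! r = zz t1 t2 ! r" using s1 pr(2) n1 by blast
    have n2: "r \<noteq> sf t1' t2'" using s2 by metis
    have r2: "cvf t1' t2' ! r = zz t1' t2' ! r" using s2 pr(2) n2 by blast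
    have "t2 = t2'" using r1 r2 eqc zr[of t1 t2] zr[of t1' t2'] by argo
    thus "t1 = t1' \<and> t2 = t2'" using e by simp
  qed
  have img: "\<phi> ` ({..<q} \<times> {..<q}) \<subseteq> ({..<q+1} - {p, r}) \<times> {..<q}"
    using sc by (auto simp: \<phi>_def)
  have "card ({..<q} \<times> {..<q}) \<le> card (({..<q+1} - {p, r}) \<times> {..<q})"
    using card_inj_on_le[OF inj img] by auto
  moreover have "card ({..<q+1} - {p, r}) = q - 1" using pr by (simp add: card_Diff_subset)
  ultimately have "q * q \<le> (q - 1) * q" by (simp add: card_cartesian_product)
  with q1 show False by (cases q) auto
qed



lemma modsub: "x < q \<Longrightarrow> c < q \<Longrightarrow> (x + q - c) mod (q::nat) = (if c \<le> x then x - c else x + q - c)"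
proof (cases "c \<le> x")
  case True
  assume "x < q" "c < q"
  have "(x+q-c) mod q = (x+q-c-q) mod q" by (rule le_mod_geq) (use True in simp)
  also have "x+q-c-q = x-c" using True by simp
  finally show ?thesis using True \<open>x<q\<close> by simp
qed simp

lemma M1: "x < q \<Longrightarrow> y < q \<Longrightarrow> c < q \<Longrightarrow> (x + q - c) mod (q::nat) = (y + q - c) mod q \<Longrightarrow> x = y"
  by (simp add: modsub split: if_splits)

lemma M2: "W < q \<Longrightarrow> x < q \<Longrightarrow> c < q \<Longrightarrow> (W + q - x) mod (q::nat) = (W + q - c) mod q \<Longrightarrow> x = c"
  by (simp add: modsub split: if_splits)

lemma modadd: "a < q \<Longrightarrow> c < q \<Longrightarrow> (a + c) mod (q::nat) = (if a + c < q then a + c else a + c - q)"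
proof (cases "a + c < q")
  case False
  assume "a < q" "c < q"
  have "a + c = (a + c - q) + q" using False by simp
  moreover have "a + c - q < q" using \<open>a<q\<close> \<open>c<q\<close> by simp
  ultimately show ?thesis using False by (metis mod_add_self2 mod_less)
qed simp

lemma M3: "a < q \<Longrightarrow> c < q \<Longrightarrow> ((a + c) mod q + q - c) mod (q::nat) = a"
proof -
  assume a: "a < q" "c < q"
  have m: "(a + c) mod q < q" using a by simp
  show ?thesis using a by (simp add: modsub[OF m a(2)] modadd)
qed

lemma M4: "a < q \<Longrightarrow> W < q \<Longrightarrow> (W + q - (W + q - a) mod q) mod (q::nat) = a"
proof -
  assume a: "a < q" "W < q"
  have m: "(W + q - a) mod q < q" using a by simp
  show ?thesis using a by (simp add: modsub[OF a(2) m] modsub[OF a(2) a(1)])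
qed

locale pcode =
  fixes q :: nat and C :: "nat list set"
  assumes pc: "perfect_code (q+1) q C" and q2: "q \<ge> 2"
begin

lemma CL: "c \<in> C \<Longrightarrow> length c = q+1 \<and> (\<forall>i<q+1. c!i < q)"
  using pc unfolding perfect_code_def by (auto simp: hverts_iff)

definition code :: "nat list \<Rightarrow> nat list" where
  "code w = (THE c. c \<in> C \<and> (\<forall>i<q-1. c!i = w!i))"

definition hh :: "nat list \<Rightarrow> nat" where
  "hh w = (w!(q-1) + q - code w ! (q-1)) mod q"

definition ss :: "nat list \<Rightarrow> nat" where
  "ss w = code w ! q"

lemma code_ex: assumes w: "w \<in> hverts q q" shows "\<exists>c\<in>C. \<forall>i<q-1. c!i = w!i"
proof -
  define z where "z = take (q-1) w @ [0, 0]"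
  have lz: "length z = q + 1" using q2 w unfolding z_def by (simp add: hverts_iff)
  have zin: "z \<in> hverts (q+1) q"
    unfolding hverts_iff using lz w q2 by (auto simp: z_def nth_append nth_Cons hverts_iff split: nat.splits)
  have pp: "q-1 < q+1" "q < q+1" "q-1 \<noteq> q" using q2 by auto
  from code_exists[OF pc pp zin]
  obtain c where c: "c \<in> C" "\<forall>i<q+1. i \<noteq> q-1 \<longrightarrow> i \<noteq> q \<longrightarrow> c!i = z!i" by blast
  have zw: "\<forall>i<q-1. z!i = w!i" using w by (auto simp: z_def nth_append hverts_iff)
  show ?thesis
  proof (intro bexI[of _ c] allI impI)
    fix i assume i: "i < q-1"
    hence "c!i = z!i" using c(2) by auto
    thus "c!i = w!i" using zw i by simp
  qed (rule c(1))
qed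

lemma code_uniq: "c1 \<in> C \<Longrightarrow> c2 \<in> C \<Longrightarrow> \<forall>i<q-1. c1!i = c2!i \<Longrightarrow> c1 = c2"
  by (rule code_D[OF pc, where p="q-1" and r=q]) auto

lemma code_prop: assumes w: "w \<in> hverts q q"
  shows "code w \<in> C" "\<forall>i<q-1. code w ! i = w!i"
proof -
  obtain c where c: "c \<in> C" "\<forall>i<q-1. c!i = w!i" using code_ex[OF w] by blast
  have "code w = c" unfolding code_def
  proof (rule the_equality)
    show "c \<in> C \<and> (\<forall>i<q - 1. c ! i = w ! i)" using c by simp
    fix c' assume "c' \<in> C \<and> (\<forall>i<q - 1. c' ! i = w ! i)"
    thus "c' = c" using c code_uniq by auto
  qed
  thus "code w \<in> C" "\<forall>i<q-1. code w ! i = w!i" using c by auto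
qed

lemma code_eq: "w \<in> hverts q q \<Longrightarrow> c \<in> C \<Longrightarrow> \<forall>i<q-1. c!i = w!i \<Longrightarrow> code w = c"
  using code_prop code_uniq by metis


lemma wupd: "w \<in> hverts q q \<Longrightarrow> v < q \<Longrightarrow> w[j:=v] \<in> hverts q q"
  by (rule hverts_update)

lemma wlen: "w \<in> hverts q q \<Longrightarrow> length w = q" by (simp add: hverts_iff)

lemma hh_lt: "hh w < q" using q2 unfolding hh_def by simp

lemma ss_lt: "w \<in> hverts q q \<Longrightarrow> ss w < q"
  unfolding ss_def using code_prop(1) CL by auto

lemma code_upd:
  assumes w: "w \<in> hverts q q" and j: "j < q" and v: "v < q"
  shows "code (w[j:=v]) \<in> C" "\<forall>i<q-1. code (w[j:=v]) ! i = (if i = j then v else w!i)"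
proof -
  have w': "w[j:=v] \<in> hverts q q" using w v by (rule wupd)
  show "code (w[j:=v]) \<in> C" using code_prop(1)[OF w'] .
  show "\<forall>i<q-1. code (w[j:=v]) ! i = (if i = j then v else w!i)"
    using code_prop(2)[OF w'] j wlen[OF w] by (auto simp: nth_list_update)
qed

lemma upd_last: "w \<in> hverts q q \<Longrightarrow> j < q \<Longrightarrow> w[j:=v] ! (q-1) = (if j = q-1 then v else w!(q-1))"
  using q2 wlen by (auto simp: nth_list_update)

lemma wlast: "w \<in> hverts q q \<Longrightarrow> w!(q-1) < q" using q2 by (auto simp: hverts_iff)

lemma code_last: "w \<in> hverts q q \<Longrightarrow> code w ! (q-1) < q" 
  using code_prop(1) CL by fastforce

lemma N0:
  assumes w: "w \<in> hverts q q" and j: "j < q" and v: "v < q" and vn: "v \<noteq> w!j"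
  shows "hh (w[j:=v]) \<noteq> hh w"
proof
  assume eq: "hh (w[j:=v]) = hh w"
  have w': "w[j:=v] \<in> hverts q q" using w v by (rule wupd)
  define c where "c = code w"
  define c' where "c' = code (w[j:=v])"
  have cC: "c \<in> C" and cw: "\<forall>i<q-1. c!i = w!i" using code_prop[OF w] by (auto simp: c_def)
  have c'C: "c' \<in> C" and c'w: "\<forall>i<q-1. c'!i = (if i = j then v else w!i)"
    using code_upd[OF w j v] by (auto simp: c'_def)
  show False
  proof (cases "j = q-1")
    case True
    have "c' = c" unfolding c'_def
      by (rule code_eq[OF w' cC]) (use cw True wlen[OF w] in \<open>auto simp: nth_list_update\<close>)
    hence "(v + q - c!(q-1)) mod q = (w!(q-1) + q - c!(q-1)) mod q"
      using eq True upd_last[OF w j] unfolding hh_def c_def c'_def by simp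
    hence "v = w!(q-1)" using M1 v wlast[OF w] code_last[OF w] c_def by blast
    thus False using vn True by simp
  next
    case False
    hence jl: "j < q-1" using j by simp
    have "(w!(q-1) + q - c'!(q-1)) mod q = (w!(q-1) + q - c!(q-1)) mod q"
      using eq False upd_last[OF w j] unfolding hh_def c_def c'_def by simp
    hence e1: "c'!(q-1) = c!(q-1)" using M2 wlast[OF w] code_last[OF w] code_last[OF w'] c_def c'_def by blast
    have "c' = c"
    proof (rule code_D[OF pc c'C cC, where p=j and r=q], intro allI impI)
      fix i assume i: "i < q+1" "i \<noteq> j" "i \<noteq> q"
      show "c'!i = c!i"
      proof (cases "i = q-1")
        case True thus ?thesis using e1 by simp
      next
        case False thus ?thesis using i c'w cw by auto
      qed
    qed
    moreover have "c'!j = v" "c!j = w!j" using c'w cw jl by auto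
    ultimately show False using vn by simp
  qed
qed

lemma Vuniq:
  assumes w: "w \<in> hverts q q" and j: "j < q" and v: "v1 < q" "v2 < q"
    and eq: "hh (w[j:=v1]) = hh (w[j:=v2])"
  shows "v1 = v2"
proof -
  have w1: "w[j:=v1] \<in> hverts q q" using w v(1) by (rule wupd)
  have w2: "w[j:=v2] \<in> hverts q q" using w v(2) by (rule wupd)
  define c1 where "c1 = code (w[j:=v1])"
  define c2 where "c2 = code (w[j:=v2])"
  have c1C: "c1 \<in> C" and c1w: "\<forall>i<q-1. c1!i = (if i = j then v1 else w!i)"
    using code_upd[OF w j v(1)] by (auto simp: c1_def)
  have c2C: "c2 \<in> C" and c2w: "\<forall>i<q-1. c2!i = (if i = j then v2 else w!i)"
    using code_upd[OF w j v(2)] by (auto simp: c2_def)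
  show ?thesis
  proof (cases "j = q-1")
    case True
    have "c1 = code w" unfolding c1_def
      by (rule code_eq[OF w1 code_prop(1)[OF w]]) (use code_prop(2)[OF w] True wlen[OF w] in \<open>auto simp: nth_list_update\<close>)
    moreover have "c2 = code w" unfolding c2_def
      by (rule code_eq[OF w2 code_prop(1)[OF w]]) (use code_prop(2)[OF w] True wlen[OF w] in \<open>auto simp: nth_list_update\<close>)
    ultimately have "(v1 + q - code w!(q-1)) mod q = (v2 + q - code w!(q-1)) mod q"
      using eq True upd_last[OF w j] unfolding hh_def c1_def c2_def by simp
    thus "v1 = v2" using M1 v code_last[OF w] by blast
  next
    case False
    hence jl: "j < q-1" using j by simp
    have "(w!(q-1) + q - c1!(q-1)) mod q = (w!(q-1) + q - c2!(q-1)) mod q"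
      using eq False upd_last[OF w j] unfolding hh_def c1_def c2_def by simp
    hence e1: "c1!(q-1) = c2!(q-1)" using M2 wlast[OF w] code_last[OF w1] code_last[OF w2] c1_def c2_def by blast
    have "c1 = c2"
    proof (rule code_D[OF pc c1C c2C, where p=j and r=q], intro allI impI)
      fix i assume i: "i < q+1" "i \<noteq> j" "i \<noteq> q"
      show "c1!i = c2!i"
      proof (cases "i = q-1")
        case True thus ?thesis using e1 by simp
      next
        case False thus ?thesis using i c1w c2w by auto
      qed
    qed
    moreover have "c1!j = v1" "c2!j = v2" using c1w c2w jl by auto
    ultimately show ?thesis by simp
  qed
qed


lemma Vex:
  assumes w: "w \<in> hverts q q" and x: "x < q" "x \<noteq> hh w" and j: "j < q"
  shows "\<exists>v. v < q \<and> v \<noteq> w!j \<and> hh (w[j:=v]) = x"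
proof (cases "j = q-1")
  case True
  define c where "c = code w"
  define v where "v = (x + c!(q-1)) mod q"
  have v: "v < q" using q2 by (simp add: v_def)
  have w': "w[j:=v] \<in> hverts q q" using w v by (rule wupd)
  have "code (w[j:=v]) = c" unfolding c_def
    by (rule code_eq[OF w' code_prop(1)[OF w]]) (use code_prop(2)[OF w] True wlen[OF w] in \<open>auto simp: nth_list_update\<close>)
  hence h: "hh (w[j:=v]) = x" unfolding hh_def using upd_last[OF w j] True M3[OF x(1) code_last[OF w]]
    by (simp add: v_def c_def)
  moreover have "v \<noteq> w!j"
  proof
    assume "v = w!j" hence "w[j:=v] = w" by simp
    thus False using h x(2) by simp
  qed
  ultimately show ?thesis using v by blast
next
  case False
  hence jl: "j < q-1" using j by simp
  define m where "m = (w!(q-1) + q - x) mod q"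
  have m: "m < q" using q2 by (simp add: m_def)
  define z where "z = w[q-1:=m] @ [0]"
  have lz: "length z = q+1" using wlen[OF w] by (simp add: z_def)
  have zin: "z \<in> hverts (q+1) q"
    unfolding hverts_iff using lz wupd[OF w m, of "q-1"] q2 by (auto simp: z_def nth_append hverts_iff)
  have pp: "j < q+1" "q < q+1" "j \<noteq> q" using j by auto
  obtain c where cC: "c \<in> C" and cz: "\<forall>i<q+1. i \<noteq> j \<longrightarrow> i \<noteq> q \<longrightarrow> c!i = z!i"
    using code_exists[OF pc pp zin] by blast
  define v where "v = c!j"
  have v: "v < q" using CL[OF cC] j by (simp add: v_def)
  have w': "w[j:=v] \<in> hverts q q" using w v by (rule wupd)
  have zi: "z!i = w!i" if "i < q-1" for i using that wlen[OF w] by (auto simp: z_def nth_append nth_list_update)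
  have cw: "code (w[j:=v]) = c"
  proof (rule code_eq[OF w' cC], intro allI impI)
    fix i assume i: "i < q-1"
    show "c!i = w[j:=v]!i"
    proof (cases "i = j")
      case True thus ?thesis using j wlen[OF w] by (simp add: v_def)
    next
      case False
      hence "c!i = z!i" using cz i by auto
      thus ?thesis using zi[OF i] False by simp
    qed
  qed
  have "c!(q-1) = z!(q-1)" using cz jl by auto
  also have "z!(q-1) = m" using wlen[OF w] q2 by (simp add: z_def nth_append)
  finally have cm: "c!(q-1) = m" .
  have h: "hh (w[j:=v]) = x" unfolding hh_def cw upd_last[OF w j] using False cm M4[OF x(1) wlast[OF w]]
    by (simp add: m_def)
  moreover have "v \<noteq> w!j"
  proof
    assume "v = w!j" hence "w[j:=v] = w" by simp
    thus False using h x(2) by simp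
  qed
  ultimately show ?thesis using v by blast
qed

definition Nb :: "nat list \<Rightarrow> nat \<Rightarrow> (nat \<times> nat) set" where
  "Nb w x = Sigma {..<q} (\<lambda>j. {v. v < q \<and> v \<noteq> w!j \<and> hh (w[j:=v]) = x})"

lemma card_Nb:
  assumes w: "w \<in> hverts q q" and x: "x < q" "x \<noteq> hh w"
  shows "card (Nb w x) = q"
proof -
  have "card {v. v < q \<and> v \<noteq> w!j \<and> hh (w[j:=v]) = x} = 1" if j: "j < q" for j
  proof -
    obtain v where v: "v < q \<and> v \<noteq> w!j \<and> hh (w[j:=v]) = x" using Vex[OF w x j] by blast
    have "{v. v < q \<and> v \<noteq> w!j \<and> hh (w[j:=v]) = x} = {v}"
      using v Vuniq[OF w j] by auto
    thus ?thesis by simp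
  qed
  hence "(\<Sum>j<q. card {v. v < q \<and> v \<noteq> w!j \<and> hh (w[j:=v]) = x}) = (\<Sum>j<q. 1)"
    by (intro sum.cong) auto
  moreover have "card (Nb w x) = (\<Sum>j<q. card {v. v < q \<and> v \<noteq> w!j \<and> hh (w[j:=v]) = x})"
    unfolding Nb_def by (rule card_SigmaI) auto
  ultimately show ?thesis by simp
qed

lemma inj_aux:
  assumes w: "w \<in> hverts q q" and x: "x < q" "x \<noteq> hh w"
    and n1: "(j1, v1) \<in> Nb w x" and n2: "(j2, v2) \<in> Nb w x" and jn: "j1 \<noteq> j2" and j2: "j2 < q-1"
    and eq: "ss (w[j1:=v1]) = ss (w[j2:=v2])"
  shows False
proof -
  have j: "j1 < q" "j2 < q" and v: "v1 < q" "v2 < q" and vn: "v1 \<noteq> w!j1" "v2 \<noteq> w!j2"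
    and hx: "hh (w[j1:=v1]) = x" "hh (w[j2:=v2]) = x"
    using n1 n2 by (auto simp: Nb_def)
  have w1: "w[j1:=v1] \<in> hverts q q" using w v(1) by (rule wupd)
  have w2: "w[j2:=v2] \<in> hverts q q" using w v(2) by (rule wupd)
  define c1 where "c1 = code (w[j1:=v1])"
  define c2 where "c2 = code (w[j2:=v2])"
  have c1C: "c1 \<in> C" and c1w: "\<forall>i<q-1. c1!i = (if i = j1 then v1 else w!i)"
    using code_upd[OF w j(1) v(1)] by (auto simp: c1_def)
  have c2C: "c2 \<in> C" and c2w: "\<forall>i<q-1. c2!i = (if i = j2 then v2 else w!i)"
    using code_upd[OF w j(2) v(2)] by (auto simp: c2_def)
  have eqq: "c1!q = c2!q" using eq by (simp add: ss_def c1_def c2_def)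
  show False
  proof (cases "j1 = q-1")
    case True
    have cc: "c1 = code w" unfolding c1_def
      by (rule code_eq[OF w1 code_prop(1)[OF w]]) (use code_prop(2)[OF w] True wlen[OF w] in \<open>auto simp: nth_list_update\<close>)
    have "c1 = c2"
    proof (rule code_D[OF pc c1C c2C, where p=j2 and r="q-1"], intro allI impI)
      fix i assume i: "i < q+1" "i \<noteq> j2" "i \<noteq> q-1"
      show "c1!i = c2!i"
      proof (cases "i = q")
        case True thus ?thesis using eqq by simp
      next
        case False
        hence "i < q-1" using i by auto
        thus ?thesis using i c2w cc code_prop(2)[OF w] by auto
      qed
    qed
    moreover have "c2!j2 = v2" using c2w j2 by auto
    moreover have "c1!j2 = w!j2" using cc code_prop(2)[OF w] j2 by auto
    ultimately show False using vn by simp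
  next
    case False
    hence j1l: "j1 < q-1" using j by simp
    have "(w!(q-1) + q - c1!(q-1)) mod q = (w!(q-1) + q - c2!(q-1)) mod q"
      using hx False j2 upd_last[OF w j(1)] upd_last[OF w j(2)] unfolding hh_def c1_def c2_def by simp
    hence e1: "c1!(q-1) = c2!(q-1)" using M2 wlast[OF w] code_last[OF w1] code_last[OF w2] c1_def c2_def by blast
    have "c1 = c2"
    proof (rule code_D[OF pc c1C c2C, where p=j1 and r=j2], intro allI impI)
      fix i assume i: "i < q+1" "i \<noteq> j1" "i \<noteq> j2"
      show "c1!i = c2!i"
      proof (cases "i = q")
        case True thus ?thesis using eqq by simp
      next
        case False
        show ?thesis
        proof (cases "i = q-1")
          case True thus ?thesis using e1 by simp
        next
          case False2: False
          hence "i < q-1" using i False by auto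
          thus ?thesis using i c1w c2w by auto
        qed
      qed
    qed
    moreover have "c1!j1 = v1" "c2!j1 = w!j1" using c1w c2w j1l jn by auto
    ultimately show False using vn by simp
  qed
qed

lemma Nb_bij:
  assumes w: "w \<in> hverts q q" and x: "x < q" "x \<noteq> hh w"
  shows "bij_betw (\<lambda>(j,v). ss (w[j:=v])) (Nb w x) {..<q}"
proof -
  have inj: "inj_on (\<lambda>(j,v). ss (w[j:=v])) (Nb w x)"
  proof (rule inj_onI, clarify)
    fix j1 v1 j2 v2
    assume n1: "(j1, v1) \<in> Nb w x" and n2: "(j2, v2) \<in> Nb w x"
      and eq: "ss (w[j1:=v1]) = ss (w[j2:=v2])"
    have j: "j1 < q" "j2 < q" and v: "v1 < q" "v2 < q"
      and hx: "hh (w[j1:=v1]) = x" "hh (w[j2:=v2]) = x"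
      using n1 n2 by (auto simp: Nb_def)
    show "j1 = j2 \<and> v1 = v2"
    proof (cases "j1 = j2")
      case True
      thus ?thesis using Vuniq[OF w j(1) v] hx by simp
    next
      case False
      show ?thesis
      proof (cases "j2 < q-1")
        case True thus ?thesis using inj_aux[OF w x n1 n2 False True eq] by simp
      next
        case False2: False
        hence "j1 < q-1" using j False by auto
        thus ?thesis using inj_aux[OF w x n2 n1 _ _ eq[symmetric]] False by auto
      qed
    qed
  qed
  have img: "(\<lambda>(j,v). ss (w[j:=v])) ` Nb w x \<subseteq> {..<q}"
    using ss_lt wupd[OF w] by (auto simp: Nb_def)
  have "card ((\<lambda>(j,v). ss (w[j:=v])) ` Nb w x) = q"
    using card_image[OF inj] card_Nb[OF w x] by simp
  hence "(\<lambda>(j,v). ss (w[j:=v])) ` Nb w x = {..<q}"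
    using img by (intro card_subset_eq) auto
  thus ?thesis using inj by (simp add: bij_betw_def)
qed

lemma hs_surj:
  assumes x: "x < q" and s: "s < q"
  shows "\<exists>w\<in>hverts q q. hh w = x \<and> ss w = s"
proof -
  define z where "z = replicate q 0 @ [s]"
  have zin: "z \<in> hverts (q+1) q"
    unfolding hverts_iff using s q2 by (auto simp: z_def nth_append)
  have pp: "0 < q+1" "q-1 < q+1" "0 \<noteq> q-1" using q2 by auto
  obtain c where cC: "c \<in> C" and cz: "\<forall>i<q+1. i \<noteq> 0 \<longrightarrow> i \<noteq> q-1 \<longrightarrow> c!i = z!i"
    using code_exists[OF pc pp zin] by blast
  have cs: "c!q = s" using cz q2 by (auto simp: z_def nth_append)
  define w where "w = take (q-1) c @ [(x + c!(q-1)) mod q]"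
  have lc: "length c = q+1" using CL[OF cC] by simp
  have win: "w \<in> hverts q q" unfolding hverts_iff using lc CL[OF cC] q2
    by (auto simp: w_def nth_append)
  have cw: "code w = c"
    by (rule code_eq[OF win cC]) (use lc q2 in \<open>auto simp: w_def nth_append\<close>)
  have "w!(q-1) = (x + c!(q-1)) mod q" using lc q2 by (simp add: w_def nth_append)
  hence "hh w = x" unfolding hh_def cw using M3[OF x] CL[OF cC] by simp
  moreover have "ss w = s" unfolding ss_def cw cs ..
  ultimately show ?thesis using win by blast
qed

end


lemma card_filter_int: "finite A \<Longrightarrow> int (card {x\<in>A. P x}) = (\<Sum>x\<in>A. if P x then 1 else 0)"
  by (simp add: sum.inter_filter[symmetric])

lemma sum_split_add: "(\<Sum>i<m + (q::nat). F i) = (\<Sum>i<m. F i) + (\<Sum>j<q. F (m + j))"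
  by (induction q) (simp_all add: add.assoc)

lemma sum_blocks: "(\<Sum>i<q * (n::nat). F i) = (\<Sum>l<n. \<Sum>j<q. F (l * q + j))"
proof (induction n)
  case (Suc n)
  have "q * Suc n = q * n + q" by simp
  hence "(\<Sum>i<q * Suc n. F i) = (\<Sum>i<q*n. F i) + (\<Sum>j<q. F (q*n + j))"
    by (simp only: sum_split_add)
  thus ?case using Suc by (simp add: mult.commute)
qed simp

lemma upd_in_hverts_adj:
  assumes y: "y \<in> hverts m q" and i: "i < m" and v: "v < q" "v \<noteq> y!i"
  shows "y[i:=v] \<in> hverts m q \<and> hadj y (y[i:=v])"
proof -
  have l: "length y = m" using y by (simp add: hverts_iff)
  have "{j. j < length y \<and> y!j \<noteq> y[i:=v]!j} = {i}"
    using i v l by (auto simp: nth_list_update)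
  hence "hdist y (y[i:=v]) = 1" by (simp add: hdist_def)
  thus ?thesis using hverts_update[OF y v(1)] by (simp add: hadj_def)
qed

lemma adj_is_upd:
  assumes y: "y \<in> hverts m q" and y': "y' \<in> hverts m q" and a: "hadj y y'"
  shows "\<exists>i<m. y'!i \<noteq> y!i \<and> y' = y[i:=y'!i]"
proof -
  have l: "length y = m" "length y' = m" using y y' by (auto simp: hverts_iff)
  have "card {j. j < length y \<and> y!j \<noteq> y'!j} = 1" using a l by (simp add: hadj_def hdist_def)
  then obtain i where iD: "{j. j < length y \<and> y!j \<noteq> y'!j} = {i}" by (rule card_1_singletonE)
  have "i \<in> {j. j < length y \<and> y!j \<noteq> y'!j}" using iD by simp
  hence i: "i < m" "y'!i \<noteq> y!i" using l by auto
  have "y' = y[i:=y'!i]"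
  proof (rule nth_equalityI)
    show "length y' = length (y[i:=y'!i])" using l by simp
    fix j assume "j < length y'"
    hence j: "j < m" using l by simp
    show "y'!j = y[i:=y'!i]!j"
    proof (cases "j = i")
      case True thus ?thesis using l j by simp
    next
      case False
      hence "j \<notin> {j. j < length y \<and> y!j \<noteq> y'!j}" using iD by simp
      thus ?thesis using False j l by simp
    qed
  qed
  thus ?thesis using i by blast
qed

lemma nbr_count:
  assumes y: "y \<in> hverts m q"
  shows "card {y'\<in>hverts m q. hadj y y' \<and> Q y'} = (\<Sum>i<m. card {v. v < q \<and> v \<noteq> y!i \<and> Q (y[i:=v])})"
proof -
  define S where "S = Sigma {..<m} (\<lambda>i. {v. v < q \<and> v \<noteq> y!i \<and> Q (y[i:=v])})"
  have l: "length y = m" using y by (simp add: hverts_iff)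
  have inj: "inj_on (\<lambda>(i,v). y[i:=v]) S"
  proof (rule inj_onI, clarify)
    fix i v i' v' assume a: "(i,v) \<in> S" "(i',v') \<in> S" and e: "y[i:=v] = y[i':=v']"
    have ii: "i < m" "i' < m" "v \<noteq> y!i" "v' \<noteq> y!i'" using a by (auto simp: S_def)
    have "i = i'"
    proof (rule ccontr)
      assume "i \<noteq> i'"
      hence "y[i:=v]!i = v" "y[i':=v']!i = y!i" using ii l by auto
      thus False using e ii by simp
    qed
    moreover have "v = v'" using e calculation ii l by (metis nth_list_update_eq)
    ultimately show "i = i' \<and> v = v'" by simp
  qed
  have "{y'\<in>hverts m q. hadj y y' \<and> Q y'} = (\<lambda>(i,v). y[i:=v]) ` S"
  proof
    show "{y'\<in>hverts m q. hadj y y' \<and> Q y'} \<subseteq> (\<lambda>(i,v). y[i:=v]) ` S"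
    proof
      fix y' assume "y' \<in> {y'\<in>hverts m q. hadj y y' \<and> Q y'}"
      hence y': "y' \<in> hverts m q" "hadj y y'" "Q y'" by auto
      obtain i where i: "i < m" "y'!i \<noteq> y!i" "y' = y[i:=y'!i]" using adj_is_upd[OF y y'(1,2)] by blast
      have "y'!i < q" using y' i by (simp add: hverts_iff)
      hence "(i, y'!i) \<in> S" using i y'(3) by (auto simp: S_def)
      thus "y' \<in> (\<lambda>(i,v). y[i:=v]) ` S" using i(3) by force
    qed
  next
    show "(\<lambda>(i,v). y[i:=v]) ` S \<subseteq> {y'\<in>hverts m q. hadj y y' \<and> Q y'}"
      using upd_in_hverts_adj[OF y] by (auto simp: S_def)
  qed
  hence "card {y'\<in>hverts m q. hadj y y' \<and> Q y'} = card S" using card_image[OF inj] by simp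
  also have "\<dots> = (\<Sum>i<m. card {v. v < q \<and> v \<noteq> y!i \<and> Q (y[i:=v])})"
    unfolding S_def by (rule card_SigmaI) auto
  finally show ?thesis .
qed

lemma block_index: "j < q \<Longrightarrow> j' < q \<Longrightarrow> l * q + j = l' * q + (j'::nat) \<Longrightarrow> l = l' \<and> j = j'"
proof -
  assume a: "j < q" "j' < q" "l * q + j = l' * q + j'"
  have q: "q > 0" using a by simp
  have "(j + l * q) div q = l" "(j' + l' * q) div q = l'" using a q by (simp_all add: div_mult_self1)
  moreover have "j + l * q = j' + l' * q" using a by (simp add: add.commute)
  ultimately have "l = l'" by metis
  thus ?thesis using a by simp
qed

lemma block_lt: "l < n \<Longrightarrow> j < q \<Longrightarrow> l * q + j < q * (n::nat)"
proof -
  assume "l < n" "j < q"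
  hence "l * q + j < l * q + q" by simp
  also have "\<dots> = (l + 1) * q" by simp
  also have "\<dots> \<le> n * q" using \<open>l < n\<close> by (intro mult_le_mono1) simp
  finally show ?thesis by (simp add: mult.commute)
qed



locale lift =
  fixes q n k :: nat and h \<sigma> :: "nat list \<Rightarrow> nat" and f :: "nat list \<Rightarrow> nat"
    and P :: "nat list set set" and Kf :: "nat list set \<Rightarrow> nat set" and aa bb cc dd :: int
  assumes q2: "q \<ge> 2"
  and hr: "w \<in> hverts q q \<Longrightarrow> h w < q"
  and sr: "w \<in> hverts q q \<Longrightarrow> \<sigma> w < q"
  and N0: "w \<in> hverts q q \<Longrightarrow> j < q \<Longrightarrow> v < q \<Longrightarrow> v \<noteq> w!j \<Longrightarrow> h (w[j:=v]) \<noteq> h w"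
  and Nbij: "w \<in> hverts q q \<Longrightarrow> x < q \<Longrightarrow> x \<noteq> h w \<Longrightarrow>
     bij_betw (\<lambda>(j,v). \<sigma> (w[j:=v])) (Sigma {..<q} (\<lambda>j. {v. v < q \<and> v \<noteq> w!j \<and> h (w[j:=v]) = x})) {..<q}"
  and hsurj: "x < q \<Longrightarrow> s < q \<Longrightarrow> \<exists>w\<in>hverts q q. h w = x \<and> \<sigma> w = s"
  and pcf: "perfect_coloring n q 2 f (\<lambda>i j. if i = 1 then (if j = 1 then aa else bb) else (if j = 1 then cc else dd))"
  and Pdisj: "F \<in> P \<Longrightarrow> G \<in> P \<Longrightarrow> F \<noteq> G \<Longrightarrow> F \<inter> G = {}"
  and Pun: "\<Union>P = {y \<in> hverts n q. f y = 1}"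
  and Pface: "F \<in> P \<Longrightarrow> Kf F \<subseteq> {0..<n} \<and> card (Kf F) = k \<and>
      (\<exists>v\<in>hverts n q. F = {x \<in> hverts n q. \<forall>i<n. i \<notin> Kf F \<longrightarrow> x!i = v!i})"
begin

definition Nb :: "nat list \<Rightarrow> nat \<Rightarrow> (nat \<times> nat) set" where
  "Nb w x = Sigma {..<q} (\<lambda>j. {v. v < q \<and> v \<noteq> w!j \<and> h (w[j:=v]) = x})"

definition blk :: "nat list \<Rightarrow> nat \<Rightarrow> nat list" where
  "blk x l = map (\<lambda>j. x!(l*q+j)) [0..<q]"

definition Phi :: "nat list \<Rightarrow> nat list" where
  "Phi x = map (\<lambda>l. h (blk x l)) [0..<n]"

lemma blk_len[simp]: "length (blk x l) = q" by (simp add: blk_def)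
lemma blk_nth[simp]: "j < q \<Longrightarrow> blk x l ! j = x!(l*q+j)" by (simp add: blk_def)

lemma blk_in: "x \<in> hverts (q*n) q \<Longrightarrow> l < n \<Longrightarrow> blk x l \<in> hverts q q"
  using block_lt by (auto simp: hverts_iff)

lemma Phi_len[simp]: "length (Phi x) = n" by (simp add: Phi_def)
lemma Phi_nth[simp]: "l < n \<Longrightarrow> Phi x ! l = h (blk x l)" by (simp add: Phi_def)

lemma Phi_in: "x \<in> hverts (q*n) q \<Longrightarrow> Phi x \<in> hverts n q"
  using blk_in hr by (auto simp: hverts_iff)

lemma blk_upd_same:
  assumes x: "x \<in> hverts (q*n) q" and l: "l < n" and j: "j < q"
  shows "blk (x[l*q+j:=v]) l = (blk x l)[j:=v]"
proof (rule nth_equalityI)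
  show "length (blk (x[l*q+j:=v]) l) = length ((blk x l)[j:=v])" by simp
  fix j' assume "j' < length (blk (x[l * q + j := v]) l)"
  hence j': "j' < q" by simp
  have lx: "length x = q*n" using x by (simp add: hverts_iff)
  have lt: "l*q+j < length x" using block_lt[OF l j] lx by simp
  show "blk (x[l*q+j:=v]) l ! j' = (blk x l)[j:=v] ! j'"
    using j' j lt block_index[OF j' j] by (auto simp: nth_list_update)
qed

lemma blk_upd_other:
  assumes j: "j < q" and ll: "l' \<noteq> l"
  shows "blk (x[l*q+j:=v]) l' = blk x l'"
proof (rule nth_equalityI)
  show "length (blk (x[l*q+j:=v]) l') = length (blk x l')" by simp
  fix j' assume "j' < length (blk (x[l * q + j := v]) l')"
  hence j': "j' < q" by simp
  have "l'*q+j' \<noteq> l*q+j" using block_index[OF j' j] ll by auto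
  thus "blk (x[l*q+j:=v]) l' ! j' = blk x l' ! j'" using j' by simp
qed

lemma Phi_upd:
  assumes x: "x \<in> hverts (q*n) q" and l: "l < n" and j: "j < q"
  shows "Phi (x[l*q+j:=v]) = (Phi x)[l := h ((blk x l)[j:=v])]"
proof (rule nth_equalityI)
  show "length (Phi (x[l*q+j:=v])) = length ((Phi x)[l := h ((blk x l)[j:=v])])" by simp
  fix l' assume "l' < length (Phi (x[l*q+j:=v]))"
  hence l': "l' < n" by simp
  show "Phi (x[l*q+j:=v]) ! l' = (Phi x)[l := h ((blk x l)[j:=v])] ! l'"
    using l' l blk_upd_same[OF x l j] blk_upd_other[OF j] by (cases "l' = l") auto
qed

lemma lift_count:
  assumes x: "x \<in> hverts (q*n) q"
  shows "card {x'\<in>hverts (q*n) q. hadj x x' \<and> Q x'} =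
    (\<Sum>l<n. \<Sum>a\<in>{..<q}-{Phi x!l}. card {z\<in>Nb (blk x l) a. Q (x[l*q+fst z := snd z])})"
proof -
  have "card {x'\<in>hverts (q*n) q. hadj x x' \<and> Q x'} =
      (\<Sum>i<q*n. card {v. v < q \<and> v \<noteq> x!i \<and> Q (x[i:=v])})" by (rule nbr_count[OF x])
  also have "\<dots> = (\<Sum>l<n. \<Sum>j<q. card {v. v < q \<and> v \<noteq> x!(l*q+j) \<and> Q (x[l*q+j:=v])})"
    by (rule sum_blocks)
  also have "\<dots> = (\<Sum>l<n. \<Sum>a\<in>{..<q}-{Phi x!l}. card {z\<in>Nb (blk x l) a. Q (x[l*q+fst z := snd z])})"
  proof (rule sum.cong[OF refl])
    fix l assume "l \<in> {..<n}"
    hence l: "l < n" by simp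
    define w where "w = blk x l"
    have w: "w \<in> hverts q q" using blk_in[OF x l] by (simp add: w_def)
    define T where "T = Sigma {..<q} (\<lambda>j. {v. v < q \<and> v \<noteq> w!j \<and> Q (x[l*q+j:=v])})"
    have "(\<Sum>j<q. card {v. v < q \<and> v \<noteq> x!(l*q+j) \<and> Q (x[l*q+j:=v])}) = card T"
      unfolding T_def by (subst card_SigmaI) (auto simp: w_def intro!: sum.cong)
    also have "\<dots> = (\<Sum>a\<in>{..<q}-{h w}. card {z\<in>T. h (w[fst z := snd z]) = a})"
    proof -
      have fT: "finite T" unfolding T_def by (rule finite_SigmaI) auto
      have img: "(\<lambda>z. h (w[fst z := snd z])) ` T \<subseteq> {..<q}-{h w}"
      proof (clarify)
        fix j v assume "(j, v) \<in> T"
        hence jv: "j < q" "v < q" "v \<noteq> w!j" by (auto simp: T_def)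
        show "h (w[fst (j, v) := snd (j, v)]) \<in> {..<q} - {h w}"
          using hr[OF hverts_update[OF w jv(2)]] N0[OF w jv] by simp
      qed
      show ?thesis using sum.group[OF fT _ img, of "\<lambda>_. 1::nat"] by simp
    qed
    also have "\<dots> = (\<Sum>a\<in>{..<q}-{Phi x!l}. card {z\<in>Nb (blk x l) a. Q (x[l*q+fst z := snd z])})"
      using l by (intro sum.cong) (auto simp: T_def Nb_def w_def intro!: arg_cong[where f=card])
    finally show "(\<Sum>j<q. card {v. v < q \<and> v \<noteq> x!(l*q+j) \<and> Q (x[l*q+j:=v])}) =
        (\<Sum>a\<in>{..<q}-{Phi x!l}. card {z\<in>Nb (blk x l) a. Q (x[l*q+fst z := snd z])})" .
  qed
  finally show ?thesis .
qed

end


lemma modcount: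
  assumes u: "u < (q::nat)"
  shows "card {s\<in>{..<q}. (s + R) mod q = u} = 1"
proof -
  define r where "r = R mod q"
  have r: "r < q" using u by (simp add: r_def)
  have eq: "(s + R) mod q = (s + r) mod q" for s unfolding r_def by (rule mod_add_right_eq[symmetric])
  define s0 where "s0 = (u + q - r) mod q"
  have s0: "s0 < q" using u by (simp add: s0_def)
  have s0e: "s0 = (if r \<le> u then u - r else u + q - r)" unfolding s0_def by (rule modsub[OF u r])
  have s0r: "(s0 + r) mod q = u"
  proof (cases "r \<le> u")
    case True thus ?thesis using s0e u by simp
  next
    case False
    hence "s0 + r = u + q" using s0e r by simp
    thus ?thesis using u by simp
  qed
  moreover have uniq: "s = s0" if "s < q" "(s + r) mod q = u" for s
  proof -
    have "(s + r) mod q = (if s + r < q then s + r else s + r - q)" by (rule modadd[OF that(1) r])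
    thus ?thesis using that s0e u r by (auto split: if_splits)
  qed
  ultimately have "{s\<in>{..<q}. (s + R) mod q = u} = {s0}"
  proof (intro set_eqI iffI)
    fix x assume "x \<in> {s\<in>{..<q}. (s + R) mod q = u}"
    hence "x < q" "(x + r) mod q = u" using eq[of x] by auto
    thus "x \<in> {s0}" using uniq by blast
  next
    fix x assume "x \<in> {s0}"
    thus "x \<in> {s\<in>{..<q}. (s + R) mod q = u}" using s0 s0r eq[of s0] by simp
  qed
  thus ?thesis by simp
qed

lemma bij_card_filter:
  assumes "bij_betw \<phi> A B"
  shows "card {z\<in>A. Q (\<phi> z)} = card {s\<in>B. Q s}"
proof -
  have "bij_betw \<phi> {z\<in>A. Q (\<phi> z)} {s\<in>B. Q s}"
    using assms unfolding bij_betw_def inj_on_def by auto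
  thus ?thesis by (rule bij_betw_same_card)
qed

context lift
begin

lemma pcf_img: "f ` hverts n q = {1..2}" using pcf unfolding perfect_coloring_def by blast
lemma pcf_cnt: "y \<in> hverts n q \<Longrightarrow> j \<in> {1..2} \<Longrightarrow>
   int (card {y'\<in>hverts n q. hadj y y' \<and> f y' = j}) = (if f y = 1 then (if j = 1 then aa else bb) else (if j = 1 then cc else dd))"
  using pcf unfolding perfect_coloring_def by blast

lemma fcol: "y \<in> hverts n q \<Longrightarrow> f y = 1 \<or> f y = 2"
proof -
  assume "y \<in> hverts n q"
  hence "f y \<in> {1..2}" using pcf_img by blast
  thus ?thesis by auto
qed

lemma nbr1: "y \<in> hverts n q \<Longrightarrow> f y = 1 \<Longrightarrow> int (card {y'\<in>hverts n q. hadj y y' \<and> f y' = 1}) = aa"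
  using pcf_cnt[of y 1] by simp
lemma nbr2: "y \<in> hverts n q \<Longrightarrow> f y = 1 \<Longrightarrow> int (card {y'\<in>hverts n q. hadj y y' \<and> f y' = 2}) = bb"
  using pcf_cnt[of y 2] by simp
lemma nbr3: "y \<in> hverts n q \<Longrightarrow> f y = 2 \<Longrightarrow> int (card {y'\<in>hverts n q. hadj y y' \<and> f y' = 1}) = cc"
  using pcf_cnt[of y 1] by simp
lemma nbr4: "y \<in> hverts n q \<Longrightarrow> f y = 2 \<Longrightarrow> int (card {y'\<in>hverts n q. hadj y y' \<and> f y' = 2}) = dd"
  using pcf_cnt[of y 2] by simp

definition face :: "nat list \<Rightarrow> nat list set" where
  "face y = (THE F. F \<in> P \<and> y \<in> F)"

lemma Fsub: "F \<in> P \<Longrightarrow> y \<in> F \<Longrightarrow> y \<in> hverts n q \<and> f y = 1"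
  using Pun by blast

lemma FB: assumes F: "F \<in> P" and y: "y \<in> F" shows "face y = F"
  unfolding face_def
proof (rule the_equality)
  show "F \<in> P \<and> y \<in> F" using F y by simp
  fix G assume G: "G \<in> P \<and> y \<in> G"
  show "G = F"
  proof (rule ccontr)
    assume "G \<noteq> F"
    hence "G \<inter> F = {}" using Pdisj G F by blast
    thus False using G y by blast
  qed
qed

lemma FA: "y \<in> hverts n q \<Longrightarrow> f y = 1 \<Longrightarrow> face y \<in> P \<and> y \<in> face y"
proof -
  assume "y \<in> hverts n q" "f y = 1"
  hence "y \<in> \<Union>P" using Pun by blast
  then obtain F where "F \<in> P" "y \<in> F" by blast
  thus ?thesis using FB by simp
qed

lemma Fchar:
  assumes F: "F \<in> P"
  shows "\<exists>v. \<forall>x. x \<in> F \<longleftrightarrow> x \<in> hverts n q \<and> (\<forall>i<n. i \<notin> Kf F \<longrightarrow> x!i = v!i)"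
proof -
  have "\<exists>v\<in>hverts n q. F = {x \<in> hverts n q. \<forall>i<n. i \<notin> Kf F \<longrightarrow> x!i = v!i}"
    using Pface[OF F] by (rule conjunct2[OF conjunct2])
  then obtain v where v: "F = {x \<in> hverts n q. \<forall>i<n. i \<notin> Kf F \<longrightarrow> x!i = v!i}" by (rule bexE)
  have "x \<in> F \<longleftrightarrow> x \<in> {x \<in> hverts n q. \<forall>i<n. i \<notin> Kf F \<longrightarrow> x!i = v!i}" for x
    using arg_cong[OF v, where f="\<lambda>S. x \<in> S"] .
  thus ?thesis by (intro exI[of _ v] allI) simp
qed

lemma Fmem:
  assumes F: "F \<in> P" and y: "y \<in> F" and l: "l \<in> Kf F" and a: "a < q"
  shows "y[l:=a] \<in> F"
proof -
  obtain v where v0: "\<forall>x. x \<in> F \<longleftrightarrow> x \<in> hverts n q \<and> (\<forall>i<n. i \<notin> Kf F \<longrightarrow> x!i = v!i)"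
    using Fchar[OF F] by (rule exE)
  note v = v0[rule_format]
  have yh: "y \<in> hverts n q" using Fsub[OF F y] by simp
  have "\<forall>i<n. i \<notin> Kf F \<longrightarrow> y[l:=a]!i = v!i"
  proof (intro allI impI)
    fix i assume i: "i < n" "i \<notin> Kf F"
    hence "i \<noteq> l" using l by blast
    hence "y[l:=a]!i = y!i" by simp
    moreover have "y!i = v!i" using v[of y] y i by simp
    ultimately show "y[l:=a]!i = v!i" by simp
  qed
  thus ?thesis using hverts_update[OF yh a] v[of "y[l:=a]"] by simp
qed

lemma Fnot:
  assumes F: "F \<in> P" and y: "y \<in> F" and l: "l < n" "l \<notin> Kf F" and a: "a \<noteq> y!l"
  shows "y[l:=a] \<notin> F"
proof
  assume y': "y[l:=a] \<in> F"
  obtain v where v0: "\<forall>x. x \<in> F \<longleftrightarrow> x \<in> hverts n q \<and> (\<forall>i<n. i \<notin> Kf F \<longrightarrow> x!i = v!i)"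
    using Fchar[OF F] by (rule exE)
  note v = v0[rule_format]
  have yh: "y \<in> hverts n q" using Fsub[OF F y] by simp
  have "y!l = v!l" using y l v[of y] by simp
  moreover have "y[l:=a]!l = v!l" using y' l v[of "y[l:=a]"] by simp
  moreover have "y[l:=a]!l = a" using yh l by (simp add: hverts_iff)
  ultimately show False using a by simp
qed

lemma Fback:
  assumes F: "F \<in> P" and y: "y \<in> hverts n q" and l: "l < n" and y': "y[l:=a] \<in> F" and lK: "l \<in> Kf F"
  shows "y \<in> F"
proof -
  have "y!l < q" using y l by (simp add: hverts_iff)
  from Fmem[OF F y' lK this] show ?thesis by simp
qed

definition rho :: "nat \<Rightarrow> nat set \<Rightarrow> nat \<Rightarrow> nat list \<Rightarrow> nat" where
  "rho e K l w = (if l \<in> K then e * h w else \<sigma> w)"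

definition gcol :: "nat \<Rightarrow> nat list \<Rightarrow> nat" where
  "gcol e x = (if f (Phi x) = 1 then 1 + (\<Sum>l<n. rho e (Kf (face (Phi x))) l (blk x l)) mod q else q + 1)"

definition Rs :: "nat \<Rightarrow> nat set \<Rightarrow> nat list \<Rightarrow> nat \<Rightarrow> nat" where
  "Rs e K x l = (\<Sum>l'\<in>{..<n}-{l}. rho e K l' (blk x l'))"

lemma card_Nb: "w \<in> hverts q q \<Longrightarrow> a < q \<Longrightarrow> a \<noteq> h w \<Longrightarrow> card (Nb w a) = q"
  using bij_betw_same_card[OF Nbij] by (simp add: Nb_def)

lemma sum_split_l: "l < n \<Longrightarrow> (\<Sum>l'<n. G l') = G l + (\<Sum>l'\<in>{..<n}-{l}. G l')"
  by (simp add: sum.remove)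

lemma gcol_upd:
  assumes x: "x \<in> hverts (q*n) q" and l: "l < n" and j: "j < q"
    and fy: "f ((Phi x)[l := h ((blk x l)[j:=v])]) = 1"
  shows "gcol e (x[l*q+j:=v]) = 1 + (rho e (Kf (face ((Phi x)[l := h ((blk x l)[j:=v])]))) l ((blk x l)[j:=v])
            + Rs e (Kf (face ((Phi x)[l := h ((blk x l)[j:=v])]))) x l) mod q"
proof -
  let ?K = "Kf (face ((Phi x)[l := h ((blk x l)[j:=v])]))"
  have "(\<Sum>l'<n. rho e ?K l' (blk (x[l*q+j:=v]) l')) =
     rho e ?K l (blk (x[l*q+j:=v]) l) + (\<Sum>l'\<in>{..<n}-{l}. rho e ?K l' (blk (x[l*q+j:=v]) l'))"
    by (rule sum_split_l[OF l])
  also have "(\<Sum>l'\<in>{..<n}-{l}. rho e ?K l' (blk (x[l*q+j:=v]) l')) = Rs e ?K x l"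
    unfolding Rs_def by (intro sum.cong) (auto simp: blk_upd_other[OF j])
  finally show ?thesis
    unfolding gcol_def Phi_upd[OF x l j] using fy blk_upd_same[OF x l j] by simp
qed

end


context lift
begin

definition cnt :: "nat \<Rightarrow> nat \<Rightarrow> nat list \<Rightarrow> nat \<Rightarrow> nat \<Rightarrow> nat" where
  "cnt e t x l a = card {z\<in>Nb (blk x l) a. gcol e (x[l*q+fst z := snd z]) = t}"

lemma Nb_mem: "z \<in> Nb w a \<Longrightarrow> fst z < q \<and> snd z < q \<and> snd z \<noteq> w!fst z \<and> h (w[fst z := snd z]) = a"
  by (auto simp: Nb_def)

lemma Phi_Nb:
  assumes x: "x \<in> hverts (q*n) q" and l: "l < n" and z: "z \<in> Nb (blk x l) a"
  shows "Phi (x[l*q+fst z := snd z]) = (Phi x)[l:=a]"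
  using Phi_upd[OF x l] Nb_mem[OF z] by simp

lemma C1:
  assumes x: "x \<in> hverts (q*n) q" and l: "l < n" and a: "a < q" "a \<noteq> Phi x ! l"
    and f: "f ((Phi x)[l:=a]) \<noteq> 1"
  shows "cnt e t x l a = (if t = q + 1 then q else 0)"
proof -
  have w: "blk x l \<in> hverts q q" by (rule blk_in[OF x l])
  have g: "gcol e (x[l*q+fst z := snd z]) = q + 1" if "z \<in> Nb (blk x l) a" for z
    using f Phi_Nb[OF x l that] by (simp add: gcol_def)
  show ?thesis
  proof (cases "t = q + 1")
    case True
    hence "{z\<in>Nb (blk x l) a. gcol e (x[l*q+fst z := snd z]) = t} = Nb (blk x l) a" using g by auto
    thus ?thesis using True card_Nb[OF w a(1)] a(2) l by (simp add: cnt_def)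
  next
    case False
    hence E: "{z\<in>Nb (blk x l) a. gcol e (x[l*q+fst z := snd z]) = t} = {}" using g by auto
    show ?thesis unfolding cnt_def E using False by simp
  qed
qed

lemma C2:
  assumes x: "x \<in> hverts (q*n) q" and l: "l < n" and a: "a < q" "a \<noteq> Phi x ! l"
    and f: "f ((Phi x)[l:=a]) = 1" and lK: "l \<in> Kf (face ((Phi x)[l:=a]))"
  shows "cnt e t x l a = (if t = 1 + (e * a + Rs e (Kf (face ((Phi x)[l:=a]))) x l) mod q then q else 0)"
proof -
  let ?V = "1 + (e * a + Rs e (Kf (face ((Phi x)[l:=a]))) x l) mod q"
  have w: "blk x l \<in> hverts q q" by (rule blk_in[OF x l])
  have g: "gcol e (x[l*q+fst z := snd z]) = ?V" if z: "z \<in> Nb (blk x l) a" for z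
  proof -
    have m: "fst z < q" "h ((blk x l)[fst z := snd z]) = a" using Nb_mem[OF z] by auto
    show ?thesis using gcol_upd[OF x l m(1), of "snd z" e] m f lK by (simp add: rho_def)
  qed
  show ?thesis
  proof (cases "t = ?V")
    case True
    hence "{z\<in>Nb (blk x l) a. gcol e (x[l*q+fst z := snd z]) = t} = Nb (blk x l) a" using g by auto
    thus ?thesis using True card_Nb[OF w a(1)] a(2) l by (simp add: cnt_def)
  next
    case False
    hence E: "{z\<in>Nb (blk x l) a. gcol e (x[l*q+fst z := snd z]) = t} = {}" using g by auto
    show ?thesis unfolding cnt_def E using False by simp
  qed
qed

lemma C3:
  assumes x: "x \<in> hverts (q*n) q" and l: "l < n" and a: "a < q" "a \<noteq> Phi x ! l"
    and f: "f ((Phi x)[l:=a]) = 1" and lK: "l \<notin> Kf (face ((Phi x)[l:=a]))"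
  shows "cnt e t x l a = (if 1 \<le> t \<and> t \<le> q then 1 else 0)"
proof -
  define R where "R = Rs e (Kf (face ((Phi x)[l:=a]))) x l"
  define w where "w = blk x l"
  have w: "w \<in> hverts q q" unfolding w_def by (rule blk_in[OF x l])
  have g: "gcol e (x[l*q+fst z := snd z]) = 1 + ((\<lambda>(j,v). \<sigma> (w[j:=v])) z + R) mod q"
    if z: "z \<in> Nb w a" for z
  proof -
    have m: "fst z < q" "h ((blk x l)[fst z := snd z]) = a" using Nb_mem[OF z] by (auto simp: w_def)
    show ?thesis using gcol_upd[OF x l m(1), of "snd z" e] m f lK
      by (simp add: rho_def R_def w_def split: prod.splits)
  qed
  have "cnt e t x l a = card {z\<in>Nb w a. 1 + ((\<lambda>(j,v). \<sigma> (w[j:=v])) z + R) mod q = t}"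
    unfolding cnt_def w_def[symmetric] using g by (intro arg_cong[where f=card]) auto
  also have "\<dots> = card {s\<in>{..<q}. 1 + (s + R) mod q = t}"
    using Nbij[OF w a(1)] a(2) l
    by (intro bij_card_filter[where Q="\<lambda>s. 1 + (s + R) mod q = t"]) (simp add: Nb_def w_def)
  also have "\<dots> = (if 1 \<le> t \<and> t \<le> q then 1 else 0)"
  proof (cases "1 \<le> t \<and> t \<le> q")
    case True
    hence "{s\<in>{..<q}. 1 + (s + R) mod q = t} = {s\<in>{..<q}. (s + R) mod q = t - 1}" by auto
    moreover have "t - 1 < q" using True by arith
    ultimately show ?thesis using True modcount by simp
  next
    case False
    have lt: "(s + R) mod q < q" for s using q2 by simp
    have E: "{s\<in>{..<q}. 1 + (s + R) mod q = t} = {}"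
    proof (rule equals0I)
      fix s assume "s \<in> {s\<in>{..<q}. 1 + (s + R) mod q = t}"
      hence "1 + (s + R) mod q = t" by simp
      thus False using False lt[of s] by linarith
    qed
    show ?thesis unfolding E using False by simp
  qed
  finally show ?thesis .
qed

end


context lift
begin

lemma NC:
  assumes y: "y \<in> hverts n q"
  shows "int (card {y'\<in>hverts n q. hadj y y' \<and> Q y'}) =
     (\<Sum>l<n. \<Sum>a\<in>{..<q}-{y!l}. if Q (y[l:=a]) then 1 else 0)"
proof -
  have "int (card {y'\<in>hverts n q. hadj y y' \<and> Q y'}) =
      (\<Sum>l<n. int (card {v. v < q \<and> v \<noteq> y!l \<and> Q (y[l:=v])}))"
    using nbr_count[OF y, of Q] by simp
  also have "\<dots> = (\<Sum>l<n. \<Sum>a\<in>{..<q}-{y!l}. if Q (y[l:=a]) then 1 else 0)"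
  proof (rule sum.cong[OF refl])
    fix l
    have "{v. v < q \<and> v \<noteq> y!l \<and> Q (y[l:=v])} = {a\<in>{..<q}-{y!l}. Q (y[l:=a])}" by auto
    thus "int (card {v. v < q \<and> v \<noteq> y!l \<and> Q (y[l:=v])}) = (\<Sum>a\<in>{..<q}-{y!l}. if Q (y[l:=a]) then 1 else 0)"
      using card_filter_int[of "{..<q}-{y!l}" "\<lambda>a. Q (y[l:=a])"] by simp
  qed
  finally show ?thesis .
qed

lemma TOT:
  assumes x: "x \<in> hverts (q*n) q"
  shows "int (card {x'\<in>hverts (q*n) q. hadj x x' \<and> gcol e x' = t}) =
     (\<Sum>l<n. \<Sum>a\<in>{..<q}-{Phi x!l}. int (cnt e t x l a))"
  using lift_count[OF x, of "\<lambda>x'. gcol e x' = t"] by (simp add: cnt_def)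

lemma ind_split:
  "y' \<in> hverts n q \<Longrightarrow> (if f y' = 1 then A else if f y' = 2 then B else 0) =
     A * (if f y' = 1 then 1 else 0) + B * (if f y' = 2 then 1 else (0::int))"
  by auto

lemma sum_ind:
  assumes y: "y \<in> hverts n q"
  shows "(\<Sum>l<n. \<Sum>a\<in>{..<q}-{y!l}. if f (y[l:=a]) = 1 then A else if f (y[l:=a]) = 2 then B else 0) =
    A * int (card {y'\<in>hverts n q. hadj y y' \<and> f y' = 1}) + B * int (card {y'\<in>hverts n q. hadj y y' \<and> f y' = 2})"
proof -
  have "(\<Sum>l<n. \<Sum>a\<in>{..<q}-{y!l}. if f (y[l:=a]) = 1 then A else if f (y[l:=a]) = 2 then B else 0) =
     (\<Sum>l<n. \<Sum>a\<in>{..<q}-{y!l}. A * (if f (y[l:=a]) = 1 then 1 else 0) + B * (if f (y[l:=a]) = 2 then 1 else 0))"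
  proof (intro sum.cong refl)
    fix l a assume "l \<in> {..<n}" "a \<in> {..<q}-{y!l}"
    hence "y[l:=a] \<in> hverts n q" using hverts_update[OF y] by auto
    thus "(if f (y[l:=a]) = 1 then A else if f (y[l:=a]) = 2 then B else 0) =
       A * (if f (y[l:=a]) = 1 then 1 else 0) + B * (if f (y[l:=a]) = 2 then 1 else 0)"
      by (rule ind_split)
  qed
  also have "\<dots> = A * (\<Sum>l<n. \<Sum>a\<in>{..<q}-{y!l}. if f (y[l:=a]) = 1 then 1 else 0) +
      B * (\<Sum>l<n. \<Sum>a\<in>{..<q}-{y!l}. if f (y[l:=a]) = 2 then 1 else 0)"
    by (simp add: sum.distrib sum_distrib_left)
  also have "\<dots> = A * int (card {y'\<in>hverts n q. hadj y y' \<and> f y' = 1}) + B * int (card {y'\<in>hverts n q. hadj y y' \<and> f y' = 2})"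
    using NC[OF y, of "\<lambda>y'. f y' = 1"] NC[OF y, of "\<lambda>y'. f y' = 2"] by simp
  finally show ?thesis .
qed

lemma row2:
  assumes x: "x \<in> hverts (q*n) q" and f2: "f (Phi x) \<noteq> 1"
  shows "int (card {x'\<in>hverts (q*n) q. hadj x x' \<and> gcol e x' = t}) =
    (if 1 \<le> t \<and> t \<le> q then 1 else 0) * cc + (if t = q + 1 then int q else 0) * dd"
proof -
  define y where "y = Phi x"
  have y: "y \<in> hverts n q" unfolding y_def by (rule Phi_in[OF x])
  have fy: "f y = 2" using fcol[OF y] f2 y_def by auto
  have "(\<Sum>l<n. \<Sum>a\<in>{..<q}-{y!l}. int (cnt e t x l a)) =
     (\<Sum>l<n. \<Sum>a\<in>{..<q}-{y!l}. if f (y[l:=a]) = 1 then (if 1 \<le> t \<and> t \<le> q then 1 else 0)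
         else if f (y[l:=a]) = 2 then (if t = q + 1 then int q else 0) else 0)"
  proof (intro sum.cong refl)
    fix l a assume la: "l \<in> {..<n}" "a \<in> {..<q}-{y!l}"
    hence l: "l < n" and a: "a < q" "a \<noteq> Phi x ! l" by (auto simp: y_def)
    have y': "y[l:=a] \<in> hverts n q" using hverts_update[OF y a(1)] .
    show "int (cnt e t x l a) = (if f (y[l:=a]) = 1 then (if 1 \<le> t \<and> t \<le> q then 1 else 0)
         else if f (y[l:=a]) = 2 then (if t = q + 1 then int q else 0) else 0)"
    proof (cases "f (y[l:=a]) = 1")
      case True
      have "l \<notin> Kf (face (y[l:=a]))"
      proof
        assume lK: "l \<in> Kf (face (y[l:=a]))"
        have "face (y[l:=a]) \<in> P" "y[l:=a] \<in> face (y[l:=a])" using FA[OF y' True] by auto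
        hence "y \<in> face (y[l:=a])" using Fback[OF _ y l _ lK] by blast
        hence "f y = 1" using Fsub \<open>face (y[l:=a]) \<in> P\<close> by blast
        thus False using fy by simp
      qed
      thus ?thesis using C3[OF x l a] True by (simp add: y_def)
    next
      case False
      hence "f (y[l:=a]) = 2" using fcol[OF y'] by simp
      thus ?thesis using C1[OF x l a] False by (simp add: y_def)
    qed
  qed
  also have "\<dots> = (if 1 \<le> t \<and> t \<le> q then 1 else 0) * cc + (if t = q + 1 then int q else 0) * dd"
    using sum_ind[OF y] nbr3[OF y fy] nbr4[OF y fy] by simp
  finally show ?thesis using TOT[OF x] by (simp add: y_def)
qed

end


lemma cardmod: "0 < (q::nat) \<Longrightarrow> card {s\<in>{..<q}. 1 + (s + R) mod q = t} = (if 1 \<le> t \<and> t \<le> q then 1 else 0)"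
proof (cases "1 \<le> t \<and> t \<le> q")
  case True
  assume q: "0 < q"
  hence "{s\<in>{..<q}. 1 + (s + R) mod q = t} = {s\<in>{..<q}. (s + R) mod q = t - 1}" using True by auto
  moreover have "t - 1 < q" using True by arith
  ultimately show ?thesis using True modcount by simp
next
  case False
  assume q: "0 < q"
  have lt: "(s + R) mod q < q" for s using q by simp
  have E: "{s\<in>{..<q}. 1 + (s + R) mod q = t} = {}"
  proof (rule equals0I)
    fix s assume "s \<in> {s\<in>{..<q}. 1 + (s + R) mod q = t}"
    hence "1 + (s + R) mod q = t" by simp
    thus False using False lt[of s] by linarith
  qed
  show ?thesis unfolding E using False by simp
qed

context lift
begin

lemma Kn: "F \<in> P \<Longrightarrow> Kf F \<subseteq> {..<n}"
proof -
  assume "F \<in> P"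
  from conjunct1[OF Pface[OF this]] show ?thesis by auto
qed
lemma Kcard: "F \<in> P \<Longrightarrow> card (Kf F) = k"
proof -
  assume "F \<in> P"
  from conjunct1[OF conjunct2[OF Pface[OF this]]] show ?thesis .
qed

lemma row1_gen:
  assumes x: "x \<in> hverts (q*n) q" and f1: "f (Phi x) = 1"
  shows "int (card {x'\<in>hverts (q*n) q. hadj x x' \<and> gcol e x' = t}) =
    (\<Sum>l\<in>Kf (face (Phi x)). \<Sum>a\<in>{..<q}-{Phi x!l}. if t = 1 + (e * a + Rs e (Kf (face (Phi x))) x l) mod q then int q else 0)
    + (if 1 \<le> t \<and> t \<le> q then 1 else 0) * aa + (if t = q + 1 then int q else 0) * bb
    - int k * (int q - 1) * (if 1 \<le> t \<and> t \<le> q then 1 else 0)"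
proof -
  define y where "y = Phi x"
  define F where "F = face y"
  define K where "K = Kf F"
  define A :: int where "A = (if 1 \<le> t \<and> t \<le> q then 1 else 0)"
  define B :: int where "B = (if t = q + 1 then int q else 0)"
  define IN where "IN l a = (if t = 1 + (e * a + Rs e K x l) mod q then int q else 0)" for l a
  define OUT where "OUT l a = (if f (y[l:=a]) = 1 then A else if f (y[l:=a]) = 2 then B else 0)" for l a
  have y: "y \<in> hverts n q" unfolding y_def by (rule Phi_in[OF x])
  have fy: "f y = 1" using f1 by (simp add: y_def)
  have FP: "F \<in> P" and yF: "y \<in> F" using FA[OF y fy] by (auto simp: F_def)
  have Kn': "K \<subseteq> {..<n}" using Kn[OF FP] by (simp add: K_def)
  have fK: "finite K" using Kn' finite_subset by blast
  have cK: "card K = k" using Kcard[OF FP] by (simp add: K_def)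
  have trm: "int (cnt e t x l a) = (if l \<in> K then IN l a else OUT l a)"
    if l: "l < n" and a: "a \<in> {..<q}-{y!l}" for l a
  proof -
    have a': "a < q" "a \<noteq> Phi x ! l" using a by (auto simp: y_def)
    have y': "y[l:=a] \<in> hverts n q" using hverts_update[OF y a'(1)] .
    show ?thesis
    proof (cases "l \<in> K")
      case True
      have "y[l:=a] \<in> F" using Fmem[OF FP yF _ a'(1)] True by (simp add: K_def)
      hence f': "f (y[l:=a]) = 1" and fa: "face (y[l:=a]) = F" using Fsub[OF FP] FB[OF FP] by auto
      have "l \<in> Kf (face ((Phi x)[l:=a]))" using True fa by (simp add: K_def y_def)
      from C2[OF x l a' _ this] f' fa True show ?thesis
        by (simp add: y_def IN_def K_def)
    next
      case False
      have nF: "y[l:=a] \<notin> F" using Fnot[OF FP yF l _ ] False a' by (simp add: K_def y_def)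
      show ?thesis
      proof (cases "f (y[l:=a]) = 1")
        case True
        have G: "face (y[l:=a]) \<in> P" "y[l:=a] \<in> face (y[l:=a])" using FA[OF y' True] by auto
        have "l \<notin> Kf (face (y[l:=a]))"
        proof
          assume lK: "l \<in> Kf (face (y[l:=a]))"
          have "y \<in> face (y[l:=a])" using Fback[OF G(1) y l G(2) lK] .
          moreover have "face (y[l:=a]) \<noteq> F" using G(2) nF by auto
          ultimately show False using Pdisj[OF G(1) FP] yF by blast
        qed
        thus ?thesis using C3[OF x l a'] True False by (simp add: y_def OUT_def A_def)
      next
        case f2: False
        hence "f (y[l:=a]) = 2" using fcol[OF y'] by simp
        thus ?thesis using C1[OF x l a'] f2 False by (simp add: y_def OUT_def B_def)
      qed
    qed
  qed
  have "int (card {x'\<in>hverts (q*n) q. hadj x x' \<and> gcol e x' = t}) =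
      (\<Sum>l<n. \<Sum>a\<in>{..<q}-{y!l}. int (cnt e t x l a))" using TOT[OF x] by (simp add: y_def)
  also have "\<dots> = (\<Sum>l<n. if l \<in> K then (\<Sum>a\<in>{..<q}-{y!l}. IN l a) else (\<Sum>a\<in>{..<q}-{y!l}. OUT l a))"
    using trm by (intro sum.cong refl) auto
  also have "\<dots> = (\<Sum>l\<in>K. \<Sum>a\<in>{..<q}-{y!l}. IN l a) + (\<Sum>l\<in>{..<n}-K. \<Sum>a\<in>{..<q}-{y!l}. OUT l a)"
  proof -
    have "{..<n} \<inter> {l. l \<in> K} = K" "{..<n} \<inter> - {l. l \<in> K} = {..<n} - K" using Kn' by auto
    thus ?thesis by (simp add: sum.If_cases)
  qed
  also have "(\<Sum>l\<in>{..<n}-K. \<Sum>a\<in>{..<q}-{y!l}. OUT l a) =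
      (\<Sum>l<n. \<Sum>a\<in>{..<q}-{y!l}. OUT l a) - (\<Sum>l\<in>K. \<Sum>a\<in>{..<q}-{y!l}. OUT l a)"
    using Kn' by (simp add: sum_diff)
  also have "(\<Sum>l<n. \<Sum>a\<in>{..<q}-{y!l}. OUT l a) = A * aa + B * bb"
    using sum_ind[OF y, of A B] nbr1[OF y fy] nbr2[OF y fy] by (simp add: OUT_def)
  also have "(\<Sum>l\<in>K. \<Sum>a\<in>{..<q}-{y!l}. OUT l a) = int k * (int q - 1) * A"
  proof -
    have "(\<Sum>a\<in>{..<q}-{y!l}. OUT l a) = (int q - 1) * A" if l: "l \<in> K" for l
    proof -
      have ln: "l < n" using l Kn' by auto
      have yl: "y!l < q" using y ln by (simp add: hverts_iff)
      have "(\<Sum>a\<in>{..<q}-{y!l}. OUT l a) = (\<Sum>a\<in>{..<q}-{y!l}. A)"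
      proof (intro sum.cong refl)
        fix a assume "a \<in> {..<q}-{y!l}"
        hence "y[l:=a] \<in> F" using Fmem[OF FP yF _] l by (simp add: K_def)
        hence "f (y[l:=a]) = 1" using Fsub[OF FP] by auto
        thus "OUT l a = A" by (simp add: OUT_def)
      qed
      also have "\<dots> = int (card ({..<q}-{y!l})) * A" by simp
      also have "card ({..<q}-{y!l}) = q - 1" using yl by simp
      finally show ?thesis using q2 by (simp add: of_nat_diff)
    qed
    hence "(\<Sum>l\<in>K. \<Sum>a\<in>{..<q}-{y!l}. OUT l a) = (\<Sum>l\<in>K. (int q - 1) * A)" by (rule sum.cong[OF refl])
    thus ?thesis using cK by simp
  qed
  finally show ?thesis by (simp add: A_def B_def IN_def K_def F_def y_def)
qed

end


context lift
begin

lemma gcol_split: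
  assumes f1: "f (Phi x) = 1" and l: "l < n"
  shows "gcol e x = 1 + (rho e (Kf (face (Phi x))) l (blk x l) + Rs e (Kf (face (Phi x))) x l) mod q"
  unfolding gcol_def Rs_def using f1
  by (simp add: sum_split_l[OF l, of "\<lambda>l'. rho e (Kf (face (Phi x))) l' (blk x l')"])

lemma IN0:
  assumes x: "x \<in> hverts (q*n) q" and f1: "f (Phi x) = 1"
  shows "(\<Sum>l\<in>Kf (face (Phi x)). \<Sum>a\<in>{..<q}-{Phi x!l}. if t = 1 + (0 * a + Rs 0 (Kf (face (Phi x))) x l) mod q then int q else 0)
     = int k * (int q - 1) * (if t = gcol 0 x then int q else 0)"
proof -
  define y where "y = Phi x"
  define K where "K = Kf (face y)"
  have y: "y \<in> hverts n q" unfolding y_def by (rule Phi_in[OF x])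
  have FP: "face y \<in> P" using FA[OF y] f1 by (simp add: y_def)
  have Kn': "K \<subseteq> {..<n}" using Kn[OF FP] by (simp add: K_def)
  have cK: "card K = k" using Kcard[OF FP] by (simp add: K_def)
  have "(\<Sum>a\<in>{..<q}-{y!l}. if t = 1 + (0 * a + Rs 0 K x l) mod q then int q else 0) =
      (int q - 1) * (if t = gcol 0 x then int q else 0)" if l: "l \<in> K" for l
  proof -
    have ln: "l < n" using l Kn' by auto
    have yl: "y!l < q" using y ln by (simp add: hverts_iff)
    have g: "gcol 0 x = 1 + (Rs 0 K x l) mod q"
      using gcol_split[OF f1 ln, of 0] l by (simp add: rho_def K_def y_def)
    have "(\<Sum>a\<in>{..<q}-{y!l}. if t = 1 + (0 * a + Rs 0 K x l) mod q then int q else 0) =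
        (\<Sum>a\<in>{..<q}-{y!l}. if t = gcol 0 x then int q else 0)" using g by simp
    also have "\<dots> = int (card ({..<q}-{y!l})) * (if t = gcol 0 x then int q else 0)" by simp
    also have "card ({..<q}-{y!l}) = q - 1" using yl by simp
    finally show ?thesis using q2 by (simp add: of_nat_diff)
  qed
  hence "(\<Sum>l\<in>K. \<Sum>a\<in>{..<q}-{y!l}. if t = 1 + (0 * a + Rs 0 K x l) mod q then int q else 0) =
      (\<Sum>l\<in>K. (int q - 1) * (if t = gcol 0 x then int q else 0))" by (rule sum.cong[OF refl])
  thus ?thesis using cK by (simp add: K_def y_def)
qed

lemma IN1:
  assumes x: "x \<in> hverts (q*n) q" and f1: "f (Phi x) = 1"
  shows "(\<Sum>l\<in>Kf (face (Phi x)). \<Sum>a\<in>{..<q}-{Phi x!l}. if t = 1 + (1 * a + Rs 1 (Kf (face (Phi x))) x l) mod q then int q else 0)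
     = int k * (int q * (if 1 \<le> t \<and> t \<le> q then 1 else 0) - (if t = gcol 1 x then int q else 0))"
proof -
  define y where "y = Phi x"
  define K where "K = Kf (face y)"
  have y: "y \<in> hverts n q" unfolding y_def by (rule Phi_in[OF x])
  have FP: "face y \<in> P" using FA[OF y] f1 by (simp add: y_def)
  have Kn': "K \<subseteq> {..<n}" using Kn[OF FP] by (simp add: K_def)
  have cK: "card K = k" using Kcard[OF FP] by (simp add: K_def)
  have "(\<Sum>a\<in>{..<q}-{y!l}. if t = 1 + (1 * a + Rs 1 K x l) mod q then int q else 0) =
      int q * (if 1 \<le> t \<and> t \<le> q then 1 else 0) - (if t = gcol 1 x then int q else 0)" if l: "l \<in> K" for l
  proof -
    define R where "R = Rs 1 K x l"
    have ln: "l < n" using l Kn' by auto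
    have yl: "y!l < q" using y ln by (simp add: hverts_iff)
    have g: "gcol 1 x = 1 + (y!l + R) mod q"
      using gcol_split[OF f1 ln, of 1] l ln by (simp add: rho_def K_def y_def R_def)
    have "(\<Sum>a\<in>{..<q}-{y!l}. if t = 1 + (1 * a + R) mod q then int q else 0) =
        (\<Sum>a\<in>{..<q}. if t = 1 + (1 * a + R) mod q then int q else 0) - (if t = 1 + (1 * y!l + R) mod q then int q else 0)"
      using yl by (simp add: sum_diff1)
    also have "(\<Sum>a\<in>{..<q}. if t = 1 + (1 * a + R) mod q then int q else 0) =
        int q * int (card {a\<in>{..<q}. 1 + (a + R) mod q = t})"
    proof -
      have "(\<Sum>a\<in>{..<q}. if t = 1 + (1 * a + R) mod q then int q else 0) =
          int q * (\<Sum>a\<in>{..<q}. if 1 + (a + R) mod q = t then 1 else 0)"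
        by (subst sum_distrib_left) (rule sum.cong, auto)
      thus ?thesis using card_filter_int[of "{..<q}" "\<lambda>a. 1 + (a + R) mod q = t"] by simp
    qed
    also have "card {a\<in>{..<q}. 1 + (a + R) mod q = t} = (if 1 \<le> t \<and> t \<le> q then 1 else 0)"
      using cardmod q2 by simp
    finally show ?thesis using g by (simp add: R_def)
  qed
  hence "(\<Sum>l\<in>K. \<Sum>a\<in>{..<q}-{y!l}. if t = 1 + (1 * a + Rs 1 K x l) mod q then int q else 0) =
      (\<Sum>l\<in>K. int q * (if 1 \<le> t \<and> t \<le> q then 1 else 0) - (if t = gcol 1 x then int q else 0))" by (rule sum.cong[OF refl])
  thus ?thesis using cK by (simp add: K_def y_def)
qed

end


context lift
begin

definition liftx :: "(nat \<Rightarrow> nat list) \<Rightarrow> nat list" where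
  "liftx B = map (\<lambda>i. B (i div q) ! (i mod q)) [0..<q*n]"

lemma liftx:
  assumes y: "y \<in> hverts n q" and B: "\<And>l. l < n \<Longrightarrow> B l \<in> hverts q q \<and> h (B l) = y!l"
  shows "liftx B \<in> hverts (q*n) q" "\<And>l. l < n \<Longrightarrow> blk (liftx B) l = B l" "Phi (liftx B) = y"
proof -
  have q0: "q > 0" using q2 by simp
  show xin: "liftx B \<in> hverts (q*n) q"
    unfolding hverts_iff
  proof (intro conjI allI impI)
    show "length (liftx B) = q*n" by (simp add: liftx_def)
    fix i assume i: "i < q*n"
    have "i div q < n" using i q0 by (simp add: div_less_iff_less_mult mult.commute)
    hence "B (i div q) \<in> hverts q q" using B by blast
    moreover have "i mod q < q" using q0 by simp
    ultimately show "liftx B ! i < q" using i by (simp add: liftx_def hverts_iff)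
  qed
  show bl: "blk (liftx B) l = B l" if l: "l < n" for l
  proof (rule nth_equalityI)
    have Bl: "B l \<in> hverts q q" using B l by blast
    show "length (blk (liftx B) l) = length (B l)" using Bl by (simp add: hverts_iff)
    fix j assume "j < length (blk (liftx B) l)"
    hence j: "j < q" by simp
    have "(l*q+j) div q = l" "(l*q+j) mod q = j" using j by auto
    thus "blk (liftx B) l ! j = B l ! j" using block_lt[OF l j] j by (simp add: liftx_def)
  qed
  show "Phi (liftx B) = y"
  proof (rule nth_equalityI)
    show "length (Phi (liftx B)) = length y" using y by (simp add: hverts_iff)
    fix l assume "l < length (Phi (liftx B))"
    hence l: "l < n" by simp
    show "Phi (liftx B) ! l = y ! l" using bl[OF l] B[OF l] l by simp
  qed
qed

lemma Wex: "\<exists>W. \<forall>a<q. W a \<in> hverts q q \<and> h (W a) = a"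
proof -
  have "\<forall>a. \<exists>w. a < q \<longrightarrow> w \<in> hverts q q \<and> h w = a" using hsurj[of _ 0] q2 by fastforce
  from choice[OF this] show ?thesis by blast
qed

lemma gcol_range: "x \<in> hverts (q*n) q \<Longrightarrow> gcol e x \<in> {1..q+1}"
proof -
  have lt: "m mod q < Suc q" for m using mod_less_divisor[of q m] q2 by linarith
  show ?thesis by (simp add: gcol_def Suc_le_eq lt)
qed

lemma gcol_le: "x \<in> hverts (q*n) q \<Longrightarrow> f (Phi x) = 1 \<Longrightarrow> gcol e x \<le> q \<and> 1 \<le> gcol e x"
proof -
  assume "f (Phi x) = 1"
  moreover have "m mod q < q" for m using q2 by simp
  ultimately show ?thesis by (simp add: gcol_def Suc_le_eq)
qed

lemma gcol_img: "gcol e ` hverts (q*n) q = {1..q+1}"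
proof
  show "gcol e ` hverts (q*n) q \<subseteq> {1..q+1}" using gcol_range by blast
next
  obtain W where W: "\<And>a. a < q \<Longrightarrow> W a \<in> hverts q q \<and> h (W a) = a" using Wex by blast
  show "{1..q+1} \<subseteq> gcol e ` hverts (q*n) q"
  proof
    fix t assume t: "t \<in> {1..q+1}"
    show "t \<in> gcol e ` hverts (q*n) q"
    proof (cases "t = q + 1")
      case True
      have "2 \<in> f ` hverts n q" using pcf_img by simp
      then obtain y where y: "y \<in> hverts n q" "f y = 2" by auto
      have B: "W (y!l) \<in> hverts q q \<and> h (W (y!l)) = y!l" if "l < n" for l
        using W y that by (simp add: hverts_iff)
      note L = liftx[OF y(1) B]
      have "gcol e (liftx (\<lambda>l. W (y!l))) = q + 1" using L(3) y(2) by (simp add: gcol_def)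
      thus ?thesis using L(1) True by force
    next
      case False
      hence t': "1 \<le> t" "t \<le> q" using t by auto
      have "1 \<in> f ` hverts n q" using pcf_img by simp
      then obtain y where y: "y \<in> hverts n q" "f y = 1" by auto
      define F where "F = face y"
      define K where "K = Kf F"
      have FP: "F \<in> P" and yF: "y \<in> F" using FA[OF y] by (auto simp: F_def)
      obtain l0 where l0: "l0 < n" "l0 \<notin> K"
      proof -
        have "2 \<in> f ` hverts n q" using pcf_img by simp
        then obtain z where z: "z \<in> hverts n q" "f z = 2" by auto
        have "\<exists>l0<n. l0 \<notin> K"
        proof (rule ccontr)
          assume "\<not> (\<exists>l0<n. l0 \<notin> K)"
          hence all: "\<forall>i<n. i \<in> K" by blast
          obtain v where v: "\<forall>x. x \<in> F \<longleftrightarrow> x \<in> hverts n q \<and> (\<forall>i<n. i \<notin> Kf F \<longrightarrow> x!i = v!i)"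
            using Fchar[OF FP] by (rule exE)
          have "z \<in> F" using v z(1) all by (simp add: K_def)
          thus False using Fsub[OF FP] z(2) by simp
        qed
        thus ?thesis using that by blast
      qed
      define B0 where "B0 l = W (y!l)" for l
      have B0: "B0 l \<in> hverts q q \<and> h (B0 l) = y!l" if "l < n" for l
        using W y that by (simp add: hverts_iff B0_def)
      define R where "R = Rs e K (liftx B0) l0"
      have "card {s\<in>{..<q}. (s + R) mod q = t - 1} = 1" using t' by (intro modcount) arith
      then obtain s0 where "{s\<in>{..<q}. (s + R) mod q = t - 1} = {s0}" by (rule card_1_singletonE)
      hence "s0 \<in> {s\<in>{..<q}. (s + R) mod q = t - 1}" by simp
      hence s: "s0 < q" "(s0 + R) mod q = t - 1" by auto
      have ylq: "y!l0 < q" using y l0 by (simp add: hverts_iff)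
      obtain w where w: "w \<in> hverts q q" "h w = y!l0" "\<sigma> w = s0" using hsurj[OF ylq s(1)] by blast
      define B where "B l = (if l = l0 then w else B0 l)" for l
      have Bp: "B l \<in> hverts q q \<and> h (B l) = y!l" if "l < n" for l
        using B0[OF that] w by (simp add: B_def)
      have L: "liftx B \<in> hverts (q*n) q" "\<And>l. l<n \<Longrightarrow> blk (liftx B) l = B l" "Phi (liftx B) = y"
        using liftx[OF y(1), of B] Bp by auto
      have L0: "liftx B0 \<in> hverts (q*n) q" "\<And>l. l<n \<Longrightarrow> blk (liftx B0) l = B0 l" "Phi (liftx B0) = y"
        using liftx[OF y(1), of B0] B0 by auto
      have fx: "f (Phi (liftx B)) = 1" using L(3) y(2) by simp
      have Rs_eq: "Rs e K (liftx B) l0 = R"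
        unfolding R_def Rs_def
      proof (intro sum.cong refl)
        fix l assume "l \<in> {..<n} - {l0}"
        hence l: "l < n" "l \<noteq> l0" by auto
        have "blk (liftx B) l = B l" by (rule L(2)[OF l(1)])
        also have "\<dots> = B0 l" using l(2) by (simp add: B_def)
        also have "\<dots> = blk (liftx B0) l" by (rule L0(2)[OF l(1), symmetric])
        finally show "rho e K l (blk (liftx B) l) = rho e K l (blk (liftx B0) l)" by simp
      qed
      have "gcol e (liftx B) = 1 + (rho e K l0 (blk (liftx B) l0) + Rs e K (liftx B) l0) mod q"
        using gcol_split[OF fx l0(1), of e] L(3) by (simp add: K_def F_def)
      also have "\<dots> = 1 + (s0 + R) mod q" using l0 L(2)[OF l0(1)] w Rs_eq by (simp add: rho_def B_def)
      also have "\<dots> = t" using s t' by simp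
      finally show ?thesis using L(1) by force
    qed
  qed
qed

end


context lift
begin

theorem col0:
  "perfect_coloring (q * n) q (q + 1) (gcol 0)
       (\<lambda>i j. if i \<le> q \<and> j \<le> q then (if i = j then aa + int k * (int q - 1)^2 else aa - int k * (int q - 1))
              else if i \<le> q then int q * bb
              else if j \<le> q then cc
              else int q * dd)"
  unfolding perfect_coloring_def
proof (intro conjI ballI)
  show "gcol 0 ` hverts (q * n) q = {1..q + 1}" by (rule gcol_img)
  fix x t assume x: "x \<in> hverts (q*n) q" and t: "t \<in> {1..q+1}"
  show "int (card {y \<in> hverts (q * n) q. hadj x y \<and> gcol 0 y = t}) =
     (if gcol 0 x \<le> q \<and> t \<le> q then (if gcol 0 x = t then aa + int k * (int q - 1)^2 else aa - int k * (int q - 1))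
              else if gcol 0 x \<le> q then int q * bb
              else if t \<le> q then cc
              else int q * dd)"
  proof (cases "f (Phi x) = 1")
    case True
    have g: "gcol 0 x \<le> q" "1 \<le> gcol 0 x" using gcol_le[OF x True] by auto
    note e1 = row1_gen[OF x True, of 0 t]
    note e2 = IN0[OF x True, of t]
    note e = e1[unfolded e2]
    show ?thesis
    proof (cases "t \<le> q")
      case tq: True
      hence "t \<noteq> q + 1" "1 \<le> t" using t by auto
      hence "int (card {y \<in> hverts (q * n) q. hadj x y \<and> gcol 0 y = t}) =
          int k * (int q - 1) * (if t = gcol 0 x then int q else 0) + aa - int k * (int q - 1)"
        using e tq by simp
      thus ?thesis using g tq by (cases "gcol 0 x = t") (auto simp: power2_eq_square algebra_simps)
    next
      case False
      hence "t = q + 1" using t by auto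
      thus ?thesis using e g by simp
    qed
  next
    case False
    have "gcol 0 x = q + 1" using False by (simp add: gcol_def)
    thus ?thesis using row2[OF x False, of 0 t] t by auto
  qed
qed

theorem col1:
  "perfect_coloring (q * n) q (q + 1) (gcol 1)
       (\<lambda>i j. if i \<le> q \<and> j \<le> q then (if i = j then aa - int k * (int q - 1) else aa + int k)
              else if i \<le> q then int q * bb
              else if j \<le> q then cc
              else int q * dd)"
  unfolding perfect_coloring_def
proof (intro conjI ballI)
  show "gcol 1 ` hverts (q * n) q = {1..q + 1}" by (rule gcol_img)
  fix x t assume x: "x \<in> hverts (q*n) q" and t: "t \<in> {1..q+1}"
  show "int (card {y \<in> hverts (q * n) q. hadj x y \<and> gcol 1 y = t}) =
     (if gcol 1 x \<le> q \<and> t \<le> q then (if gcol 1 x = t then aa - int k * (int q - 1) else aa + int k)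
              else if gcol 1 x \<le> q then int q * bb
              else if t \<le> q then cc
              else int q * dd)"
  proof (cases "f (Phi x) = 1")
    case True
    have g: "gcol 1 x \<le> q" "1 \<le> gcol 1 x" using gcol_le[OF x True] by auto
    note e1 = row1_gen[OF x True, of 1 t]
    note e2 = IN1[OF x True, of t]
    note e = e1[unfolded e2]
    show ?thesis
    proof (cases "t \<le> q")
      case tq: True
      hence "t \<noteq> q + 1" "1 \<le> t" using t by auto
      hence "int (card {y \<in> hverts (q * n) q. hadj x y \<and> gcol 1 y = t}) =
          int k * (int q - (if t = gcol 1 x then int q else 0)) + aa - int k * (int q - 1)"
        using e tq by simp
      thus ?thesis using g tq by (cases "gcol 1 x = t") (auto simp: algebra_simps)
    next
      case False
      hence "t = q + 1" using t by auto
      thus ?thesis using e g by simp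
    qed
  next
    case False
    have "gcol 1 x = q + 1" using False by (simp add: gcol_def)
    thus ?thesis using row2[OF x False, of 1 t] t by auto
  qed
qed

end


lemma q_ge2:
  assumes pc: "perfect_coloring n q 2 f S"
  shows "q \<ge> 2"
proof (rule ccontr)
  assume "\<not> q \<ge> 2"
  hence q1: "q \<le> 1" by simp
  have img: "f ` hverts n q = {1..2}" using pc unfolding perfect_coloring_def by (rule conjunct1)
  have i1: "1 \<in> f ` hverts n q" using img by simp
  have i2: "2 \<in> f ` hverts n q" using img by simp
  obtain y1 where y1: "y1 \<in> hverts n q" "f y1 = 1" using i1 by (metis imageE)
  obtain y2 where y2: "y2 \<in> hverts n q" "f y2 = 2" using i2 by (metis imageE)
  note y = y1(1) y2(1) y1(2) y2(2)
  have "y1 = y2"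
  proof (rule nth_equalityI)
    show "length y1 = length y2" using y by (simp add: hverts_iff)
    fix i assume "i < length y1"
    hence "i < n" using y by (simp add: hverts_iff)
    hence "y1!i < q" "y2!i < q" using y by (auto simp: hverts_iff)
    thus "y1!i = y2!i" using q1 by simp
  qed
  thus False using y by simp
qed

theorem lemma9:
  fixes n q k :: nat and a b c d :: int and f :: "nat list \<Rightarrow> nat"
  assumes "perfect_coloring n q 2 f
             (\<lambda>i j. if i = 1 then (if j = 1 then a else b) else (if j = 1 then c else d))"
    and "partitionable_into_faces n q k {x \<in> hverts n q. f x = 1}"
    and "\<exists>C. perfect_code (q + 1) q C"
  shows "\<exists>g' g''.
     perfect_coloring (q * n) q (q + 1) g'
       (\<lambda>i j. if i \<le> q \<and> j \<le> q then (if i = j then a - int k * (int q - 1) else a + int k)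
              else if i \<le> q then int q * b
              else if j \<le> q then c
              else int q * d) \<and>
     perfect_coloring (q * n) q (q + 1) g''
       (\<lambda>i j. if i \<le> q \<and> j \<le> q then (if i = j then a + int k * (int q - 1)^2 else a - int k * (int q - 1))
              else if i \<le> q then int q * b
              else if j \<le> q then c
              else int q * d)"
proof -
  have q2: "q \<ge> 2" by (rule q_ge2[OF assms(1)])
  obtain C where C: "perfect_code (q + 1) q C" using assms(3) by blast
  interpret pc: pcode q C using C q2 by unfold_locales
  have "\<exists>P. (\<forall>F\<in>P. is_face n q k F) \<and> (\<forall>F\<in>P. \<forall>G\<in>P. F \<noteq> G \<longrightarrow> F \<inter> G = {}) \<and> \<Union>P = {x \<in> hverts n q. f x = 1}"
    using assms(2) unfolding partitionable_into_faces_def .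
  then obtain P where PP: "(\<forall>F\<in>P. is_face n q k F) \<and> (\<forall>F\<in>P. \<forall>G\<in>P. F \<noteq> G \<longrightarrow> F \<inter> G = {}) \<and> \<Union>P = {x \<in> hverts n q. f x = 1}"
    by (rule exE)
  note P = conjunct1[OF PP] conjunct1[OF conjunct2[OF PP]] conjunct2[OF conjunct2[OF PP]]
  define Kf where "Kf F = (SOME K. \<exists>v. K \<subseteq> {0..<n} \<and> card K = k \<and> v \<in> hverts n q \<and>
      F = {x \<in> hverts n q. \<forall>i<n. i \<notin> K \<longrightarrow> x ! i = v ! i})" for F
  have Pface: "Kf F \<subseteq> {0..<n} \<and> card (Kf F) = k \<and>
      (\<exists>v\<in>hverts n q. F = {x \<in> hverts n q. \<forall>i<n. i \<notin> Kf F \<longrightarrow> x!i = v!i})" if F: "F \<in> P" for F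
  proof -
    have "\<exists>K v. K \<subseteq> {0..<n} \<and> card K = k \<and> v \<in> hverts n q \<and>
      F = {x \<in> hverts n q. \<forall>i<n. i \<notin> K \<longrightarrow> x ! i = v ! i}"
    proof -
      have "is_face n q k F" using P(1) F by blast
      thus ?thesis unfolding is_face_def .
    qed
    hence "\<exists>v. Kf F \<subseteq> {0..<n} \<and> card (Kf F) = k \<and> v \<in> hverts n q \<and>
      F = {x \<in> hverts n q. \<forall>i<n. i \<notin> Kf F \<longrightarrow> x ! i = v ! i}"
      unfolding Kf_def by (rule someI_ex)
    then obtain v where v: "Kf F \<subseteq> {0..<n} \<and> card (Kf F) = k \<and> v \<in> hverts n q \<and>
      F = {x \<in> hverts n q. \<forall>i<n. i \<notin> Kf F \<longrightarrow> x ! i = v ! i}" by (rule exE)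
    note v1 = conjunct1[OF v] and v2 = conjunct1[OF conjunct2[OF v]]
      and v3 = conjunct1[OF conjunct2[OF conjunct2[OF v]]] and v4 = conjunct2[OF conjunct2[OF conjunct2[OF v]]]
    have v5: "\<exists>v\<in>hverts n q. F = {x \<in> hverts n q. \<forall>i<n. i \<notin> Kf F \<longrightarrow> x ! i = v ! i}"
    proof (rule bexI[where x=v])
      show "F = {x \<in> hverts n q. \<forall>i<n. i \<notin> Kf F \<longrightarrow> x ! i = v ! i}" by (rule v4)
      show "v \<in> hverts n q" by (rule v3)
    qed
    show ?thesis using v1 v2 v5 by (intro conjI)
  qed
  interpret L: lift q n k pc.hh pc.ss f P Kf a b c d
  proof (unfold_locales)
    show "2 \<le> q" by (rule q2)
    show "\<And>w. w \<in> hverts q q \<Longrightarrow> pc.hh w < q" using pc.hh_lt .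
    show "\<And>w. w \<in> hverts q q \<Longrightarrow> pc.ss w < q" by (rule pc.ss_lt)
    show "\<And>w j v. w \<in> hverts q q \<Longrightarrow> j < q \<Longrightarrow> v < q \<Longrightarrow> v \<noteq> w ! j \<Longrightarrow> pc.hh (w[j := v]) \<noteq> pc.hh w"
      by (rule pc.N0)
    show "\<And>w x. w \<in> hverts q q \<Longrightarrow> x < q \<Longrightarrow> x \<noteq> pc.hh w \<Longrightarrow>
      bij_betw (\<lambda>(j, v). pc.ss (w[j := v])) (SIGMA j:{..<q}. {v. v < q \<and> v \<noteq> w ! j \<and> pc.hh (w[j := v]) = x}) {..<q}"
      by (rule pc.Nb_bij[unfolded pc.Nb_def])
    show "\<And>x s. x < q \<Longrightarrow> s < q \<Longrightarrow> \<exists>w\<in>hverts q q. pc.hh w = x \<and> pc.ss w = s" by (rule pc.hs_surj)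
    show "perfect_coloring n q 2 f (\<lambda>i j. if i = 1 then if j = 1 then a else b else if j = 1 then c else d)"
      by (rule assms(1))
    show "\<And>F G. F \<in> P \<Longrightarrow> G \<in> P \<Longrightarrow> F \<noteq> G \<Longrightarrow> F \<inter> G = {}" using P(2) by blast
    show "\<Union> P = {y \<in> hverts n q. f y = 1}" by (rule P(3))
    show "\<And>F. F \<in> P \<Longrightarrow> Kf F \<subseteq> {0..<n} \<and> card (Kf F) = k \<and>
      (\<exists>v\<in>hverts n q. F = {x \<in> hverts n q. \<forall>i<n. i \<notin> Kf F \<longrightarrow> x ! i = v ! i})" by (rule Pface)
  qed
  show ?thesis
    by (rule exI[of _ "L.gcol 1"], rule exI[of _ "L.gcol 0"], intro conjI L.col1 L.col0)
qed


end
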